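(* Let $(L_x)_{x\in S}$ be an $S$-glued system with $S$-glued sum $L$. If every $L_x$ is semimodular, then $L$ is a semimodular lattice of finite length. If every $L_x$ is modular, then $L$ is a modular lattice of finite length.
   Context: Let $S$ be a lattice of finite length (every chain in $S$ is finite), with order $\le$, join $\vee$ and meet $\wedge$; $x\prec y$ means that $y$ covers $x$. An \emph{$S$-glued system} is a family $(L_x,\le_x)_{x\in S}$ of lattices of finite length (with join $+_x$, meet $\cdot_x$, least element $0_x$, greatest element $1_x$), whose underlying sets may overlap, such that for all $x,y\in S$: (1) if $x\le y$ and $L_x\cap L_y\ne\emptyset$, then $L_x\cap L_y$ is a filter of $L_x$ and an ideal of $L_y$; (2) in the situation of (1), for all $a,b\in L_x\cap L_y$: $a\le_x b$ iff $a\le_y b$; (3) if $x\prec y$ then $L_x\cap L_y\ne\emptyset$; (4) $L_x\cap L_y\subseteq L_{x\wedge y}\cap L_{x\vee y}$. The \emph{$S$-glued sum} of the system is the set $L=\bigcup_{x\in S}L_x$ equipped with the relation $\le$ defined as the transitive closure of $\bigcup_{x\in S}\le_x$; it is a lattice. A lattice $K$ of finite length is \emph{semimodular} if whenever $b\ne c$ both cover $a$ in $K$, then $b\vee c$ covers both $b$ and $c$. A lattice has finite length if all its chains are finite. *)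

theory Defs
  imports Main
begin

definition order_on :: "'a set \<Rightarrow> ('a \<Rightarrow> 'a \<Rightarrow> bool) \<Rightarrow> bool" where
  "order_on A le \<longleftrightarrow>
     (\<forall>a\<in>A. le a a) \<and>
     (\<forall>a\<in>A. \<forall>b\<in>A. le a b \<and> le b a \<longrightarrow> a = b) \<and>
     (\<forall>a\<in>A. \<forall>b\<in>A. \<forall>c\<in>A. le a b \<and> le b c \<longrightarrow> le a c)"

definition is_lub :: "'a set \<Rightarrow> ('a \<Rightarrow> 'a \<Rightarrow> bool) \<Rightarrow> 'a \<Rightarrow> 'a \<Rightarrow> 'a \<Rightarrow> bool" where
  "is_lub A le a b z \<longleftrightarrow> z \<in> A \<and> le a z \<and> le b z \<and> (\<forall>w\<in>A. le a w \<and> le b w \<longrightarrow> le z w)"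

definition is_glb :: "'a set \<Rightarrow> ('a \<Rightarrow> 'a \<Rightarrow> bool) \<Rightarrow> 'a \<Rightarrow> 'a \<Rightarrow> 'a \<Rightarrow> bool" where
  "is_glb A le a b z \<longleftrightarrow> z \<in> A \<and> le z a \<and> le z b \<and> (\<forall>w\<in>A. le w a \<and> le w b \<longrightarrow> le w z)"

definition ljoin :: "'a set \<Rightarrow> ('a \<Rightarrow> 'a \<Rightarrow> bool) \<Rightarrow> 'a \<Rightarrow> 'a \<Rightarrow> 'a" where
  "ljoin A le a b = (THE z. is_lub A le a b z)"

definition lmeet :: "'a set \<Rightarrow> ('a \<Rightarrow> 'a \<Rightarrow> bool) \<Rightarrow> 'a \<Rightarrow> 'a \<Rightarrow> 'a" where
  "lmeet A le a b = (THE z. is_glb A le a b z)"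

definition lattice_on :: "'a set \<Rightarrow> ('a \<Rightarrow> 'a \<Rightarrow> bool) \<Rightarrow> bool" where
  "lattice_on A le \<longleftrightarrow> order_on A le \<and> A \<noteq> {} \<and>
     (\<forall>a\<in>A. \<forall>b\<in>A. (\<exists>z. is_lub A le a b z) \<and> (\<exists>z. is_glb A le a b z))"

definition finite_length :: "'a set \<Rightarrow> ('a \<Rightarrow> 'a \<Rightarrow> bool) \<Rightarrow> bool" where
  "finite_length A le \<longleftrightarrow>
     (\<forall>Ch. Ch \<subseteq> A \<and> (\<forall>a\<in>Ch. \<forall>b\<in>Ch. le a b \<or> le b a) \<longrightarrow> finite Ch)"

definition fl_lattice :: "'a set \<Rightarrow> ('a \<Rightarrow> 'a \<Rightarrow> bool) \<Rightarrow> bool" where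
  "fl_lattice A le \<longleftrightarrow> lattice_on A le \<and> finite_length A le"

definition covers :: "'a set \<Rightarrow> ('a \<Rightarrow> 'a \<Rightarrow> bool) \<Rightarrow> 'a \<Rightarrow> 'a \<Rightarrow> bool" where
  "covers A le a b \<longleftrightarrow> a \<in> A \<and> b \<in> A \<and> le a b \<and> a \<noteq> b \<and>
     \<not> (\<exists>z\<in>A. le a z \<and> le z b \<and> z \<noteq> a \<and> z \<noteq> b)"

definition semimodular_on :: "'a set \<Rightarrow> ('a \<Rightarrow> 'a \<Rightarrow> bool) \<Rightarrow> bool" where
  "semimodular_on A le \<longleftrightarrow>
     (\<forall>a b c. covers A le a b \<and> covers A le a c \<and> b \<noteq> c \<longrightarrow>
        covers A le b (ljoin A le b c) \<and> covers A le c (ljoin A le b c))"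

definition modular_on :: "'a set \<Rightarrow> ('a \<Rightarrow> 'a \<Rightarrow> bool) \<Rightarrow> bool" where
  "modular_on A le \<longleftrightarrow>
     (\<forall>a\<in>A. \<forall>b\<in>A. \<forall>c\<in>A. le a c \<longrightarrow>
        ljoin A le a (lmeet A le b c) = lmeet A le (ljoin A le a b) c)"

definition is_filter :: "'a set \<Rightarrow> ('a \<Rightarrow> 'a \<Rightarrow> bool) \<Rightarrow> 'a set \<Rightarrow> bool" where
  "is_filter A le F \<longleftrightarrow> F \<subseteq> A \<and> F \<noteq> {} \<and>
     (\<forall>a\<in>F. \<forall>b\<in>A. le a b \<longrightarrow> b \<in> F) \<and>
     (\<forall>a\<in>F. \<forall>b\<in>F. lmeet A le a b \<in> F)"

definition is_ideal :: "'a set \<Rightarrow> ('a \<Rightarrow> 'a \<Rightarrow> bool) \<Rightarrow> 'a set \<Rightarrow> bool" where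
  "is_ideal A le I \<longleftrightarrow> I \<subseteq> A \<and> I \<noteq> {} \<and>
     (\<forall>a\<in>I. \<forall>b\<in>A. le b a \<longrightarrow> b \<in> I) \<and>
     (\<forall>a\<in>I. \<forall>b\<in>I. ljoin A le a b \<in> I)"

definition scovers :: "'s::order \<Rightarrow> 's \<Rightarrow> bool" where
  "scovers x y \<longleftrightarrow> x < y \<and> \<not> (\<exists>z. x < z \<and> z < y)"

definition glued_system :: "('s::lattice \<Rightarrow> 'a set) \<Rightarrow> ('s \<Rightarrow> 'a \<Rightarrow> 'a \<Rightarrow> bool) \<Rightarrow> bool" where
  "glued_system C R \<longleftrightarrow>
     (\<forall>x. fl_lattice (C x) (R x)) \<and>
     (\<forall>x y. x \<le> y \<and> C x \<inter> C y \<noteq> {} \<longrightarrow>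
        is_filter (C x) (R x) (C x \<inter> C y) \<and> is_ideal (C y) (R y) (C x \<inter> C y)) \<and>
     (\<forall>x y. x \<le> y \<and> C x \<inter> C y \<noteq> {} \<longrightarrow>
        (\<forall>a\<in>C x \<inter> C y. \<forall>b\<in>C x \<inter> C y. R x a b \<longleftrightarrow> R y a b)) \<and>
     (\<forall>x y. scovers x y \<longrightarrow> C x \<inter> C y \<noteq> {}) \<and>
     (\<forall>x y. C x \<inter> C y \<subseteq> C (inf x y) \<inter> C (sup x y))"

definition glued_carrier :: "('s \<Rightarrow> 'a set) \<Rightarrow> 'a set" where
  "glued_carrier C = (\<Union>x. C x)"

definition glued_le :: "('s \<Rightarrow> 'a set) \<Rightarrow> ('s \<Rightarrow> 'a \<Rightarrow> 'a \<Rightarrow> bool) \<Rightarrow> 'a \<Rightarrow> 'a \<Rightarrow> bool" where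
  "glued_le C R = tranclp (\<lambda>a b. \<exists>x. a \<in> C x \<and> b \<in> C x \<and> R x a b)"

end

theory Submission
  imports Defs
begin


lemma order_onD:
  assumes "order_on A le"
  shows "a\<in>A \<Longrightarrow> le a a"
    and "a\<in>A \<Longrightarrow> b\<in>A \<Longrightarrow> le a b \<Longrightarrow> le b a \<Longrightarrow> a = b"
    and "a\<in>A \<Longrightarrow> b\<in>A \<Longrightarrow> c\<in>A \<Longrightarrow> le a b \<Longrightarrow> le b c \<Longrightarrow> le a c"
  using assms unfolding order_on_def by blast+

lemma fl_wf:
  assumes o: "order_on A le" and f: "finite_length A le"
  shows "wf {(x,y). x\<in>A \<and> y\<in>A \<and> le x y \<and> x \<noteq> y}"
proof (rule ccontr)
  assume "\<not> ?thesis"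
  then obtain g where g: "\<And>i. (g (Suc i), g i) \<in> {(x,y). x\<in>A \<and> y\<in>A \<and> le x y \<and> x \<noteq> y}"
    unfolding wf_iff_no_infinite_down_chain by blast
  have A: "g i \<in> A" for i using g[of i] by auto
  have dec: "i \<le> j \<Longrightarrow> le (g j) (g i)" for i j
  proof (induction j)
    case 0 thus ?case using A order_onD(1)[OF o] by auto
  next
    case (Suc j)
    show ?case
    proof (cases "i = Suc j")
      case True thus ?thesis using A order_onD(1)[OF o] by auto
    next
      case False
      hence "i \<le> j" using Suc.prems by auto
      hence "le (g j) (g i)" using Suc.IH by auto
      moreover have "le (g (Suc j)) (g j)" using g[of j] by auto
      ultimately show ?thesis using order_onD(3)[OF o] A by blast
    qed
  qed
  have neq: "i < j \<Longrightarrow> g i \<noteq> g j" for i j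
  proof
    assume ij: "i < j" and e: "g i = g j"
    hence "le (g j) (g (Suc i))" using dec by auto
    moreover have "le (g (Suc i)) (g i)" "g (Suc i) \<noteq> g i" using g[of i] by auto
    ultimately show False using e order_onD(2)[OF o] A by metis
  qed
  have inj: "inj g"
    by (rule injI) (metis neq linorder_neqE_nat)
  have "finite (range g)" using f unfolding finite_length_def
    apply (elim allE[of _ "range g"])
    using A dec by (auto, metis nat_le_linear)
  hence "finite (UNIV :: nat set)" using finite_imageD inj by blast
  thus False by simp
qed

lemma wf_min: "wf r \<Longrightarrow> x \<in> Q \<Longrightarrow> \<exists>z\<in>Q. \<forall>y. (y,z) \<in> r \<longrightarrow> y \<notin> Q"
  unfolding wf_eq_minimal by blast

lemma order_on_flip: "order_on A le \<Longrightarrow> order_on A (\<lambda>x y. le y x)"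
  unfolding order_on_def by blast

lemma fl_flip: "finite_length A le \<Longrightarrow> finite_length A (\<lambda>x y. le y x)"
  unfolding finite_length_def by blast

lemma fl_wf':
  assumes o: "order_on A le" and f: "finite_length A le"
  shows "wf {(x,y). x\<in>A \<and> y\<in>A \<and> le y x \<and> x \<noteq> y}"
  using fl_wf[OF order_on_flip[OF o] fl_flip[OF f]] .

lemma lub_flip: "is_lub A (\<lambda>x y. le y x) a b z = is_glb A le a b z"
  unfolding is_lub_def is_glb_def by simp
lemma glb_flip: "is_glb A (\<lambda>x y. le y x) a b z = is_lub A le a b z"
  unfolding is_lub_def is_glb_def by simp
lemma ljoin_flip: "ljoin A (\<lambda>x y. le y x) = lmeet A le"
  unfolding ljoin_def lmeet_def lub_flip by simp
lemma lmeet_flip: "lmeet A (\<lambda>x y. le y x) = ljoin A le"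
  unfolding ljoin_def lmeet_def glb_flip by simp
lemma covers_flip: "covers A (\<lambda>x y. le y x) a b = covers A le b a"
  unfolding covers_def by blast

lemma fl_lattice_flip: "fl_lattice A le \<Longrightarrow> fl_lattice A (\<lambda>x y. le y x)"
  unfolding fl_lattice_def lattice_on_def using order_on_flip fl_flip lub_flip glb_flip by metis

locale fll =
  fixes A :: "'a set" and le :: "'a \<Rightarrow> 'a \<Rightarrow> bool"
  assumes fl: "fl_lattice A le"
begin

abbreviation J where "J a b \<equiv> ljoin A le a b"
abbreviation M where "M a b \<equiv> lmeet A le a b"
abbreviation cov where "cov a b \<equiv> covers A le a b"

lemma ord: "order_on A le" and lat: "lattice_on A le" and fin: "finite_length A le"
  using fl unfolding fl_lattice_def lattice_on_def by auto

lemma refl: "a\<in>A \<Longrightarrow> le a a" using order_onD(1)[OF ord] .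
lemma antisym: "a\<in>A \<Longrightarrow> b\<in>A \<Longrightarrow> le a b \<Longrightarrow> le b a \<Longrightarrow> a = b" using order_onD(2)[OF ord] .
lemma trans: "a\<in>A \<Longrightarrow> b\<in>A \<Longrightarrow> c\<in>A \<Longrightarrow> le a b \<Longrightarrow> le b c \<Longrightarrow> le a c" using order_onD(3)[OF ord] .
lemma nonempty: "A \<noteq> {}" using lat unfolding lattice_on_def by auto

lemma lub_unique: "is_lub A le a b z \<Longrightarrow> is_lub A le a b z' \<Longrightarrow> z = z'"
  unfolding is_lub_def using antisym by blast
lemma glb_unique: "is_glb A le a b z \<Longrightarrow> is_glb A le a b z' \<Longrightarrow> z = z'"
  unfolding is_glb_def using antisym by blast

lemma J_lub: "a\<in>A \<Longrightarrow> b\<in>A \<Longrightarrow> is_lub A le a b (J a b)"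
  unfolding ljoin_def by (rule theI') (use lat lub_unique in \<open>auto simp: lattice_on_def\<close>)
lemma M_glb: "a\<in>A \<Longrightarrow> b\<in>A \<Longrightarrow> is_glb A le a b (M a b)"
  unfolding lmeet_def by (rule theI') (use lat glb_unique in \<open>auto simp: lattice_on_def\<close>)

lemma J_eq: "is_lub A le a b z \<Longrightarrow> a\<in>A \<Longrightarrow> b\<in>A \<Longrightarrow> J a b = z"
  using J_lub lub_unique by blast
lemma M_eq: "is_glb A le a b z \<Longrightarrow> a\<in>A \<Longrightarrow> b\<in>A \<Longrightarrow> M a b = z"
  using M_glb glb_unique by blast

lemma J_in: "a\<in>A \<Longrightarrow> b\<in>A \<Longrightarrow> J a b \<in> A" using J_lub[of a b] unfolding is_lub_def by blast
lemma J_ub1: "a\<in>A \<Longrightarrow> b\<in>A \<Longrightarrow> le a (J a b)" using J_lub[of a b] unfolding is_lub_def by blast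
lemma J_ub2: "a\<in>A \<Longrightarrow> b\<in>A \<Longrightarrow> le b (J a b)" using J_lub[of a b] unfolding is_lub_def by blast
lemma J_least: "a\<in>A \<Longrightarrow> b\<in>A \<Longrightarrow> w\<in>A \<Longrightarrow> le a w \<Longrightarrow> le b w \<Longrightarrow> le (J a b) w"
  using J_lub[of a b] unfolding is_lub_def by blast
lemma M_in: "a\<in>A \<Longrightarrow> b\<in>A \<Longrightarrow> M a b \<in> A" using M_glb[of a b] unfolding is_glb_def by blast
lemma M_lb1: "a\<in>A \<Longrightarrow> b\<in>A \<Longrightarrow> le (M a b) a" using M_glb[of a b] unfolding is_glb_def by blast
lemma M_lb2: "a\<in>A \<Longrightarrow> b\<in>A \<Longrightarrow> le (M a b) b" using M_glb[of a b] unfolding is_glb_def by blast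
lemma M_greatest: "a\<in>A \<Longrightarrow> b\<in>A \<Longrightarrow> w\<in>A \<Longrightarrow> le w a \<Longrightarrow> le w b \<Longrightarrow> le w (M a b)"
  using M_glb[of a b] unfolding is_glb_def by blast

lemma J_comm: "a\<in>A \<Longrightarrow> b\<in>A \<Longrightarrow> J a b = J b a"
  by (intro J_eq) (auto simp: is_lub_def intro: J_in J_ub1 J_ub2 J_least)
lemma M_comm: "a\<in>A \<Longrightarrow> b\<in>A \<Longrightarrow> M a b = M b a"
  by (intro M_eq) (auto simp: is_glb_def intro: M_in M_lb1 M_lb2 M_greatest)
lemma J_absorb: "a\<in>A \<Longrightarrow> b\<in>A \<Longrightarrow> le a b \<Longrightarrow> J a b = b"
  by (intro J_eq) (auto simp: is_lub_def intro: refl)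
lemma M_absorb: "a\<in>A \<Longrightarrow> b\<in>A \<Longrightarrow> le a b \<Longrightarrow> M a b = a"
  by (intro M_eq) (auto simp: is_glb_def intro: refl)
lemma J_le_iff: "a\<in>A \<Longrightarrow> b\<in>A \<Longrightarrow> w\<in>A \<Longrightarrow> le (J a b) w \<longleftrightarrow> le a w \<and> le b w"
  by (meson J_in J_least J_ub1 J_ub2 trans)
lemma M_ge_iff: "a\<in>A \<Longrightarrow> b\<in>A \<Longrightarrow> w\<in>A \<Longrightarrow> le w (M a b) \<longleftrightarrow> le w a \<and> le w b"
  by (meson M_in M_greatest M_lb1 M_lb2 trans)
lemma J_assoc: assumes "a\<in>A" "b\<in>A" "c\<in>A" shows "J (J a b) c = J a (J b c)"
proof -
  have e1: "le (J (J a b) c) w \<longleftrightarrow> le a w \<and> le b w \<and> le c w" if "w\<in>A" for w using assms that by (simp add: J_in J_le_iff)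
  have e2: "le (J a (J b c)) w \<longleftrightarrow> le a w \<and> le b w \<and> le c w" if "w\<in>A" for w using assms that by (simp add: J_in J_le_iff)
  have i1: "J (J a b) c \<in> A" "J a (J b c) \<in> A" using assms by (simp_all add: J_in)
  show ?thesis using e1[OF i1(2)] e2[OF i1(1)] e1[OF i1(1)] e2[OF i1(2)] refl[OF i1(1)] refl[OF i1(2)] antisym[OF i1] by blast
qed

lemma wf_lt: "wf {(x,y). x\<in>A \<and> y\<in>A \<and> le x y \<and> x \<noteq> y}" using fl_wf[OF ord fin] .
lemma wf_gt: "wf {(x,y). x\<in>A \<and> y\<in>A \<and> le y x \<and> x \<noteq> y}" using fl_wf'[OF ord fin] .

lemma cover_above:
  assumes "a\<in>A" "b\<in>A" "le a b" "a \<noteq> b"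
  shows "\<exists>c. cov a c \<and> le c b"
proof -
  let ?X = "{c. c\<in>A \<and> le a c \<and> le c b \<and> c \<noteq> a}"
  have "b \<in> ?X" using assms refl by auto
  from wf_min[OF wf_lt this] obtain c where c: "c \<in> ?X" and min: "\<And>y. (y,c) \<in> {(x,y). x\<in>A \<and> y\<in>A \<and> le x y \<and> x \<noteq> y} \<Longrightarrow> y \<notin> ?X"
    by blast
  have nz: "\<not> (\<exists>z\<in>A. le a z \<and> le z c \<and> z \<noteq> a \<and> z \<noteq> c)"
  proof
    assume "\<exists>z\<in>A. le a z \<and> le z c \<and> z \<noteq> a \<and> z \<noteq> c"
    then obtain z where z: "z\<in>A" "le a z" "le z c" "z \<noteq> a" "z \<noteq> c" by blast
    have "le z b" using c z trans assms by blast
    hence "z \<in> ?X" using z by blast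
    moreover have "(z,c) \<in> {(x,y). x\<in>A \<and> y\<in>A \<and> le x y \<and> x \<noteq> y}" using z c by blast
    ultimately show False using min by blast
  qed
  have "cov a c" unfolding covers_def using nz c assms by blast
  thus ?thesis using c by blast
qed

lemma cover_below:
  assumes "a\<in>A" "b\<in>A" "le a b" "a \<noteq> b"
  shows "\<exists>c. cov c b \<and> le a c"
proof -
  let ?X = "{c. c\<in>A \<and> le a c \<and> le c b \<and> c \<noteq> b}"
  have "a \<in> ?X" using assms refl by auto
  from wf_min[OF wf_gt this] obtain c where c: "c \<in> ?X" and min: "\<And>y. (y,c) \<in> {(x,y). x\<in>A \<and> y\<in>A \<and> le y x \<and> x \<noteq> y} \<Longrightarrow> y \<notin> ?X"
    by blast
  have nz: "\<not> (\<exists>z\<in>A. le c z \<and> le z b \<and> z \<noteq> c \<and> z \<noteq> b)"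
  proof
    assume "\<exists>z\<in>A. le c z \<and> le z b \<and> z \<noteq> c \<and> z \<noteq> b"
    then obtain z where z: "z\<in>A" "le c z" "le z b" "z \<noteq> c" "z \<noteq> b" by blast
    have "le a z" using c z trans assms by blast
    hence "z \<in> ?X" using z by blast
    moreover have "(z,c) \<in> {(x,y). x\<in>A \<and> y\<in>A \<and> le y x \<and> x \<noteq> y}" using z c by blast
    ultimately show False using min by blast
  qed
  have "cov c b" unfolding covers_def using nz c assms by blast
  thus ?thesis using c by blast
qed

lemma has_top: "\<exists>t\<in>A. \<forall>a\<in>A. le a t"
proof -
  obtain a0 where "a0 \<in> A" using nonempty by auto
  from wf_min[OF wf_gt this] obtain t where t: "t \<in> A" and max: "\<And>y. (y,t) \<in> {(x,y). x\<in>A \<and> y\<in>A \<and> le y x \<and> x \<noteq> y} \<Longrightarrow> y \<notin> A"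
    by blast
  have "le a t" if "a \<in> A" for a
  proof -
    have "J t a \<in> A" "le t (J t a)" using J_in J_ub1 t that by auto
    hence "J t a = t" using max[of "J t a"] t by blast
    thus ?thesis using J_ub2 t that by metis
  qed
  thus ?thesis using t by auto
qed

lemma has_bot: "\<exists>t\<in>A. \<forall>a\<in>A. le t a"
proof -
  obtain a0 where "a0 \<in> A" using nonempty by auto
  from wf_min[OF wf_lt this] obtain t where t: "t \<in> A" and max: "\<And>y. (y,t) \<in> {(x,y). x\<in>A \<and> y\<in>A \<and> le x y \<and> x \<noteq> y} \<Longrightarrow> y \<notin> A"
    by blast
  have "le t a" if "a \<in> A" for a
  proof -
    have "M t a \<in> A" "le (M t a) t" using M_in M_lb1 t that by auto
    hence "M t a = t" using max[of "M t a"] t by blast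
    thus ?thesis using M_lb2 t that by metis
  qed
  thus ?thesis using t by auto
qed

lemma covD: "cov a b \<Longrightarrow> a\<in>A \<and> b\<in>A \<and> le a b \<and> a \<noteq> b"
  unfolding covers_def by auto
lemma cov_between: "cov a b \<Longrightarrow> z\<in>A \<Longrightarrow> le a z \<Longrightarrow> le z b \<Longrightarrow> z = a \<or> z = b"
  unfolding covers_def by auto

end

lemma fll_flip: "fll A le \<Longrightarrow> fll A (\<lambda>x y. le y x)"
  unfolding fll_def using fl_lattice_flip by blast



context fll begin

lemma BU:
  assumes usm: "semimodular_on A le" and aA: "a\<in>A" and bA: "b\<in>A" and cv: "cov (M a b) a"
  shows "cov b (J a b)"
proof -
  let ?r = "{(x,y). x\<in>A \<and> y\<in>A \<and> le y x \<and> x \<noteq> y}"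
  have "\<forall>a\<in>A. M a b = m \<longrightarrow> cov m a \<longrightarrow> cov b (J a b)" for m
  proof (induction m rule: wf_induct[OF wf_gt])
    case (1 m)
    show ?case
    proof (intro ballI impI)
      fix a assume aA: "a\<in>A" and mdef: "M a b = m" and cma: "cov m a"
      have mA: "m \<in> A" using mdef M_in aA bA by metis
      have mb: "le m b" using mdef M_lb2 aA bA by metis
      have ma: "m \<noteq> a" using cma covD by blast
      show "cov b (J a b)"
      proof (cases "m = b")
        case True
        hence "le b a" using mdef M_lb1 aA bA by metis
        hence "J a b = a" using J_comm J_absorb aA bA by metis
        thus ?thesis using cma True by simp
      next
        case False
        obtain b1 where cb1: "cov m b1" and b1b: "le b1 b" using cover_above[OF mA bA mb False] by blast
        have b1A: "b1 \<in> A" and mb1: "le m b1" "m \<noteq> b1" using covD[OF cb1] by auto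
        have nab: "\<not> le a b"
        proof
          assume "le a b" hence "M a b = a" using M_absorb aA bA by metis
          thus False using mdef ma by simp
        qed
        have b1a: "b1 \<noteq> a" using b1b nab by blast
        have sm: "cov a (J a b1) \<and> cov b1 (J a b1)"
          using usm cma cb1 b1a unfolding semimodular_on_def by blast
        define a' where "a' = J a b1"
        have a'A: "a' \<in> A" using a'_def J_in aA b1A by metis
        have cb1a': "cov b1 a'" using sm a'_def by simp
        have aa': "le a a'" using a'_def J_ub1 aA b1A by metis
        have "le b1 (M a' b)" using M_greatest[OF a'A bA b1A] covD[OF cb1a'] b1b by blast
        moreover have "le (M a' b) a'" using M_lb1 a'A bA by metis
        moreover have "M a' b \<in> A" using M_in a'A bA by metis
        ultimately have "M a' b = b1 \<or> M a' b = a'" using cov_between[OF cb1a'] by blast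
        moreover have "M a' b \<noteq> a'"
        proof
          assume "M a' b = a'"
          hence "le a' b" using M_lb2 a'A bA by metis
          hence "le a b" using trans[OF aA a'A bA aa'] by blast
          thus False using nab by blast
        qed
        ultimately have e: "M a' b = b1" by blast
        have "(b1, m) \<in> ?r" using b1A mA mb1 by blast
        hence "cov b (J a' b)" using "1"[rule_format, of b1 a'] a'A e cb1a' by blast
        moreover have "J a' b = J a b"
          using a'_def J_assoc[OF aA b1A bA] J_absorb[OF b1A bA b1b] by simp
        ultimately show ?thesis by simp
      qed
    qed
  qed
  thus ?thesis using aA cv by blast
qed

lemma CP:
  assumes usm: "semimodular_on A le" and cxd: "cov x d" and bA: "b\<in>A"
  shows "J x b = J d b \<or> cov (J x b) (J d b)"
proof -
  have xA: "x\<in>A" and dA: "d\<in>A" and xd: "le x d" "x \<noteq> d" using covD[OF cxd] by auto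
  have pA: "J x b \<in> A" using J_in xA bA by metis
  have pd: "le (J x b) (J d b)" using J_le_iff[OF xA bA J_in[OF dA bA]] J_ub1[OF dA bA] J_ub2[OF dA bA] trans[OF xA dA J_in[OF dA bA] xd(1)] by blast
  show ?thesis
  proof (cases "le d (J x b)")
    case True
    hence "le (J d b) (J x b)" using J_least[OF dA bA pA] J_ub2[OF xA bA] by blast
    thus ?thesis using antisym pd pA J_in[OF dA bA] by blast
  next
    case False
    have "le x (M d (J x b))" using M_greatest[OF dA pA xA] xd J_ub1[OF xA bA] by blast
    moreover have "le (M d (J x b)) d" using M_lb1[OF dA pA] .
    ultimately have "M d (J x b) = x \<or> M d (J x b) = d" using cov_between[OF cxd M_in[OF dA pA]] by blast
    moreover have "M d (J x b) \<noteq> d" using False M_lb2[OF dA pA] by metis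
    ultimately have "M d (J x b) = x" by blast
    hence "cov (M d (J x b)) d" using cxd by simp
    hence "cov (J x b) (J d (J x b))" using BU[OF usm dA pA] by blast
    moreover have "J d (J x b) = J d b"
      using J_assoc[OF dA xA bA, symmetric] J_comm[OF dA xA] J_absorb[OF xA dA xd(1)] by simp
    ultimately show ?thesis by simp
  qed
qed

end

lemma (in fll) BL:
  assumes lsm: "semimodular_on A (\<lambda>x y. le y x)" and aA: "a\<in>A" and bA: "b\<in>A" and cv: "cov a (J a b)"
  shows "cov (M a b) b"
proof -
  interpret d: fll A "\<lambda>x y. le y x" using fll_flip fll_axioms by blast
  have "covers A le a (ljoin A le a b) \<Longrightarrow> covers A le (lmeet A le a b) b"
    using d.BU[OF lsm aA bA] by (simp only: ljoin_flip[of A le] lmeet_flip[of A le] covers_flip[of A le])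
  thus ?thesis using cv by simp
qed

lemma (in fll) LSM_cov:
  assumes lsm: "semimodular_on A (\<lambda>x y. le y x)" and "cov g e" "cov d e" "g \<noteq> d"
  shows "cov (M g d) g \<and> cov (M g d) d"
proof -
  have "covers A (\<lambda>x y. le y x) e g \<and> covers A (\<lambda>x y. le y x) e d \<and> g \<noteq> d \<longrightarrow>
    covers A (\<lambda>x y. le y x) g (ljoin A (\<lambda>x y. le y x) g d) \<and> covers A (\<lambda>x y. le y x) d (ljoin A (\<lambda>x y. le y x) g d)"
    using lsm unfolding semimodular_on_def
    apply -
    apply (erule allE[where x=e])
    apply (erule allE[where x=g])
    apply (erule allE[where x=d])
    apply assumption
    done
  thus ?thesis using assms(2-4) unfolding ljoin_flip[of A le] covers_flip[of A le] by blast
qed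

context fll begin

lemma keyP:
  assumes usm: "semimodular_on A le" and lsm: "semimodular_on A (\<lambda>x y. le y x)" and eA: "e\<in>A"
  shows "\<forall>b d. b\<in>A \<longrightarrow> d\<in>A \<longrightarrow> le (M b e) d \<longrightarrow> le d e \<longrightarrow> J d b = J e b \<longrightarrow> d = e"
  using eA
proof (induction e rule: wf_induct[OF wf_lt])
  case (1 e)
  note IH = "1.IH" and eA = "1.prems"
  show ?case
  proof (intro allI impI)
    fix b d0 assume bA: "b\<in>A" and d0A: "d0\<in>A" and md0: "le (M b e) d0" and d0e: "le d0 e" and jd0: "J d0 b = J e b"
    show "d0 = e"
    proof (rule ccontr)
      assume ne: "d0 \<noteq> e"
      obtain d where cde: "cov d e" and d0d: "le d0 d" using cover_below[OF d0A eA d0e ne] by blast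
      have dA: "d\<in>A" and de: "le d e" "d \<noteq> e" using covD[OF cde] by auto
      have jA: "J e b \<in> A" using J_in eA bA by metis
      have jd: "J d b = J e b"
      proof (rule antisym[OF J_in[OF dA bA] jA])
        show "le (J d b) (J e b)" using J_least[OF dA bA jA] trans[OF dA eA jA de(1) J_ub1[OF eA bA]] J_ub2[OF eA bA] by blast
        have "le d0 (J d b)" using trans[OF d0A dA J_in[OF dA bA] d0d J_ub1[OF dA bA]] .
        hence "le (J d0 b) (J d b)" using J_least[OF d0A bA J_in[OF dA bA]] J_ub2[OF dA bA] by blast
        thus "le (J e b) (J d b)" using jd0 by simp
      qed
      define m where "m = M b e"
      have mA: "m\<in>A" using m_def M_in bA eA by metis
      have md: "le m d" using m_def trans[OF M_in[OF bA eA] d0A dA md0 d0d] by simp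
      have mb: "le m b" using m_def M_lb1[OF bA eA] by simp
      show False
      proof (cases "m = d")
        case True
        hence "cov (M e b) e" using cde m_def M_comm[OF bA eA] by simp
        hence "cov b (J e b)" using BU[OF usm eA bA] by blast
        moreover have "J e b = b" using jd True mb J_absorb[OF dA bA] by simp
        ultimately show False using covD by metis
      next
        case False
        obtain x where cxd: "cov x d" and mx: "le m x" using cover_below[OF mA dA md False] by blast
        have xA: "x\<in>A" and xd: "le x d" "x \<noteq> d" using covD[OF cxd] by auto
        have Mle: "le (M b y) m" if yA: "y\<in>A" and ye: "le y e" for y
          using m_def M_greatest[OF bA eA M_in[OF bA yA]] M_lb1[OF bA yA] trans[OF M_in[OF bA yA] yA eA M_lb2[OF bA yA] ye] by simp
        define p where "p = J x b"
        have pA: "p\<in>A" using p_def J_in xA bA by metis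
        have "(d, e) \<in> {(x,y). x\<in>A \<and> y\<in>A \<and> le x y \<and> x \<noteq> y}" using dA eA de by blast
        hence IHd: "\<forall>b' d'. b'\<in>A \<longrightarrow> d'\<in>A \<longrightarrow> le (M b' d) d' \<longrightarrow> le d' d \<longrightarrow> J d' b' = J d b' \<longrightarrow> d' = d"
          using IH dA by blast
        have h1: "le (M b d) x" using trans[OF M_in[OF bA dA] mA xA Mle[OF dA de(1)] mx] .
        have pne: "p \<noteq> J d b"
        proof
          assume "p = J d b"
          hence "J x b = J d b" using p_def by simp
          hence "x = d" using IHd[rule_format, OF bA xA h1 xd(1)] by blast
          thus False using xd(2) by blast
        qed
        have cpj: "cov p (J e b)" using CP[OF usm cxd bA] pne p_def jd by simp
        have pj: "le p (J e b)" using covD[OF cpj] by blast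
        have jep: "J p e = J e b"
        proof (rule antisym[OF J_in[OF pA eA] jA])
          show "le (J p e) (J e b)" using J_least[OF pA eA jA] pj J_ub1[OF eA bA] by blast
          have bp: "le b p" using p_def J_ub2 xA bA by metis
          have "le (J d b) (J p e)"
            using J_least[OF dA bA J_in[OF pA eA]] trans[OF dA eA J_in[OF pA eA] de(1) J_ub2[OF pA eA]]
              trans[OF bA pA J_in[OF pA eA] bp J_ub1[OF pA eA]] by blast
          thus "le (J e b) (J p e)" using jd by simp
        qed
        define g where "g = M p e"
        have gA: "g\<in>A" using g_def M_in pA eA by metis
        have cge: "cov g e" using BL[OF lsm pA eA] cpj jep g_def by simp
        have gd: "g \<noteq> d"
        proof
          assume "g = d"
          hence "le d p" using g_def M_lb1[OF pA eA] by simp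
          hence "le (J d b) p" using J_least[OF dA bA pA] p_def J_ub2[OF xA bA] by simp
          hence "p = J e b" using antisym[OF pA jA pj] jd by simp
          thus False using covD[OF cpj] by blast
        qed
        have ls: "cov (M g d) g \<and> cov (M g d) d" using LSM_cov[OF lsm cge cde gd] .
        have xg: "le x g" using g_def M_greatest[OF pA eA xA] p_def J_ub1[OF xA bA] trans[OF xA dA eA xd(1) de(1)] by simp
        have "le x (M g d)" using M_greatest[OF gA dA xA] xg xd by blast
        hence "M g d = x \<or> M g d = d" using cov_between[OF cxd M_in[OF gA dA]] M_lb2[OF gA dA] by blast
        moreover have "M g d \<noteq> d"
        proof
          assume e1: "M g d = d"
          hence "cov d g" using ls by simp
          hence "le d g" "d \<noteq> g" using covD by auto
          moreover have "le g e" using covD[OF cge] by blast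
          ultimately have "g = d \<or> g = e" using cov_between[OF cde gA] by blast
          thus False using covD[OF cge] gd by blast
        qed
        ultimately have cxg: "cov x g" using ls by auto
        have "(g, e) \<in> {(x,y). x\<in>A \<and> y\<in>A \<and> le x y \<and> x \<noteq> y}" using gA eA covD[OF cge] by blast
        hence IHg: "\<forall>b' d'. b'\<in>A \<longrightarrow> d'\<in>A \<longrightarrow> le (M b' g) d' \<longrightarrow> le d' g \<longrightarrow> J d' b' = J g b' \<longrightarrow> d' = g"
          using IH gA by blast
        have ge: "le g e" using covD[OF cge] by blast
        have "le (M b g) x" using trans[OF M_in[OF bA gA] mA xA Mle[OF gA ge] mx] .
        moreover have "J x b = J g b"
        proof (rule antisym[OF J_in[OF xA bA] J_in[OF gA bA]])
          show "le (J x b) (J g b)" using J_least[OF xA bA J_in[OF gA bA]] trans[OF xA gA J_in[OF gA bA] xg J_ub1[OF gA bA]] J_ub2[OF gA bA] by blast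
          have "le g p" using g_def M_lb1[OF pA eA] by simp
          thus "le (J g b) (J x b)" using J_least[OF gA bA pA] p_def J_ub2[OF xA bA] by simp
        qed
        ultimately have "x = g" using IHg[rule_format, OF bA xA] xg by blast
        thus False using covD[OF cxg] by blast
      qed
    qed
  qed
qed

lemma usm_lsm_modular:
  assumes usm: "semimodular_on A le" and lsm: "semimodular_on A (\<lambda>x y. le y x)"
  shows "modular_on A le"
  unfolding modular_on_def
proof (intro ballI impI)
  fix a b c assume aA: "a\<in>A" and bA: "b\<in>A" and cA: "c\<in>A" and ac: "le a c"
  define d where "d = J a (M b c)"
  define e where "e = M (J a b) c"
  have mA: "M b c \<in> A" using M_in bA cA by metis
  have abA: "J a b \<in> A" using J_in aA bA by metis
  have dA: "d \<in> A" using d_def J_in aA mA by metis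
  have eA: "e \<in> A" using e_def M_in abA cA by metis
  have mab: "le (M b c) (J a b)" using trans[OF mA bA abA M_lb1[OF bA cA] J_ub2[OF aA bA]] .
  have de: "le d e" using d_def e_def J_least[OF aA mA eA] M_greatest[OF abA cA aA] M_greatest[OF abA cA mA]
      J_ub1[OF aA bA] ac mab M_lb2[OF bA cA] by simp
  have ec: "le e c" using e_def M_lb2[OF abA cA] by simp
  have "le (M b e) (M b c)" using M_greatest[OF bA cA M_in[OF bA eA]] M_lb1[OF bA eA] trans[OF M_in[OF bA eA] eA cA M_lb2[OF bA eA] ec] by blast
  hence mbe: "le (M b e) d" using trans[OF M_in[OF bA eA] mA dA] d_def J_ub2[OF aA mA] by simp
  have jd: "J d b = J a b"
  proof (rule antisym[OF J_in[OF dA bA] abA])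
    show "le (J d b) (J a b)" using J_least[OF dA bA abA] d_def J_least[OF aA mA abA] J_ub1[OF aA bA] mab J_ub2[OF aA bA] by simp
    have "le a (J d b)" using trans[OF aA dA J_in[OF dA bA] _ J_ub1[OF dA bA]] d_def J_ub1[OF aA mA] by simp
    thus "le (J a b) (J d b)" using J_least[OF aA bA J_in[OF dA bA]] J_ub2[OF dA bA] by blast
  qed
  have je: "J e b = J a b"
  proof (rule antisym[OF J_in[OF eA bA] abA])
    show "le (J e b) (J a b)" using J_least[OF eA bA abA] e_def M_lb1[OF abA cA] J_ub2[OF aA bA] by simp
    have "le d (J e b)" using trans[OF dA eA J_in[OF eA bA] de J_ub1[OF eA bA]] .
    hence "le (J d b) (J e b)" using J_least[OF dA bA J_in[OF eA bA]] J_ub2[OF eA bA] by blast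
    thus "le (J a b) (J e b)" using jd by simp
  qed
  have "d = e" using keyP[OF usm lsm eA] bA dA mbe de jd je by simp
  thus "J a (M b c) = M (J a b) c" using d_def e_def by simp
qed

lemma modular_usm:
  assumes mo: "modular_on A le"
  shows "semimodular_on A le"
  unfolding semimodular_on_def
proof (intro allI impI)
  fix a b c assume h: "cov a b \<and> cov a c \<and> b \<noteq> c"
  have aA: "a\<in>A" and bA: "b\<in>A" and cA: "c\<in>A" and ab: "le a b" "a\<noteq>b" and ac: "le a c" "a \<noteq> c"
    using h covD by auto
  have main: "cov x (J x y)" if cxa: "cov a x" and cya: "cov a y" and xy: "x \<noteq> y" for x y
  proof -
    have xA: "x\<in>A" and yA: "y\<in>A" and ax: "le a x" and ay: "le a y" "a \<noteq> y" using cxa cya covD by auto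
    have jA: "J x y \<in> A" using J_in xA yA by metis
    have ne: "x \<noteq> J x y"
    proof
      assume "x = J x y" hence "le y x" using J_ub2[OF xA yA] by simp
      hence "y = a \<or> y = x" using cov_between[OF cxa yA ay(1)] by blast
      thus False using ay xy by blast
    qed
    have nz: "\<not> (\<exists>z\<in>A. le x z \<and> le z (J x y) \<and> z \<noteq> x \<and> z \<noteq> J x y)"
    proof
      assume "\<exists>z\<in>A. le x z \<and> le z (J x y) \<and> z \<noteq> x \<and> z \<noteq> J x y"
      then obtain z where zA: "z\<in>A" and xz: "le x z" and zj: "le z (J x y)" and zx: "z \<noteq> x" and zj': "z \<noteq> J x y" by blast
      have "le a (M y z)" using M_greatest[OF yA zA aA] ay trans[OF aA xA zA ax xz] by blast
      hence "M y z = a \<or> M y z = y" using cov_between[OF cya M_in[OF yA zA]] M_lb1[OF yA zA] by blast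
      thus False
      proof
        assume "M y z = y"
        hence "le y z" using M_lb2[OF yA zA] by metis
        hence "le (J x y) z" using J_least[OF xA yA zA] xz by blast
        thus False using antisym[OF zA jA zj] zj' by blast
      next
        assume e: "M y z = a"
        have "J x (M y z) = M (J x y) z" using mo xA yA zA xz unfolding modular_on_def by blast
        moreover have "J x (M y z) = x" using e J_comm[OF xA aA] J_absorb[OF aA xA ax] by simp
        moreover have "M (J x y) z = z" using M_comm[OF jA zA] M_absorb[OF zA jA zj] by simp
        ultimately show False using zx by simp
      qed
    qed
    show ?thesis unfolding covers_def using xA jA J_ub1[OF xA yA] ne nz by blast
  qed
  show "cov b (J b c) \<and> cov c (J b c)"
    using main[of b c] main[of c b] h J_comm[OF bA cA] by auto
qed

lemma modular_flip:
  assumes mo: "modular_on A le"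
  shows "modular_on A (\<lambda>x y. le y x)"
  unfolding modular_on_def ljoin_flip[of A le] lmeet_flip[of A le]
proof (intro ballI impI)
  fix a b c assume aA: "a\<in>A" and bA: "b\<in>A" and cA: "c\<in>A" and ca: "le c a"
  have "J c (M b a) = M (J c b) a" using mo cA bA aA ca unfolding modular_on_def by blast
  moreover have "M a (J b c) = M (J c b) a" by (metis M_comm[OF aA J_in[OF bA cA]] J_comm[OF bA cA])
  moreover have "J (M a b) c = J c (M b a)" by (metis J_comm[OF M_in[OF aA bA] cA] M_comm[OF aA bA])
  ultimately show "M a (J b c) = J (M a b) c" by simp
qed

lemma modular_lsm:
  assumes mo: "modular_on A le"
  shows "semimodular_on A (\<lambda>x y. le y x)"
proof -
  interpret d: fll A "\<lambda>x y. le y x" using fll_flip fll_axioms by blast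
  show ?thesis using d.modular_usm[OF modular_flip[OF mo]] .
qed

end


locale glued =
  fixes C :: "'s::lattice \<Rightarrow> 'a set" and R :: "'s \<Rightarrow> 'a \<Rightarrow> 'a \<Rightarrow> bool"
  assumes S_fl: "finite_length (UNIV :: 's set) (\<le>)" and gl: "glued_system C R"
begin

lemmas gsplit = gl[unfolded glued_system_def]
lemmas gs1 = conjunct1[OF gsplit] and gs2 = conjunct1[OF conjunct2[OF gsplit]]
  and gs3 = conjunct1[OF conjunct2[OF conjunct2[OF gsplit]]]
  and gs4 = conjunct1[OF conjunct2[OF conjunct2[OF conjunct2[OF gsplit]]]]
  and gs5 = conjunct2[OF conjunct2[OF conjunct2[OF conjunct2[OF gsplit]]]]

lemma glD1: "fl_lattice (C x) (R x)"
  using gs1 by (elim allE)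
lemma glD2: "x \<le> y \<Longrightarrow> C x \<inter> C y \<noteq> {} \<Longrightarrow> is_filter (C x) (R x) (C x \<inter> C y)"
  using gs2 by blast
lemma glD3: "x \<le> y \<Longrightarrow> C x \<inter> C y \<noteq> {} \<Longrightarrow> is_ideal (C y) (R y) (C x \<inter> C y)"
  using gs2 by blast
lemma glD4: "x \<le> y \<Longrightarrow> C x \<inter> C y \<noteq> {} \<Longrightarrow> a \<in> C x \<inter> C y \<Longrightarrow> b \<in> C x \<inter> C y \<Longrightarrow> R x a b \<longleftrightarrow> R y a b"
  using gs3 by blast
lemma glD5: "scovers x y \<Longrightarrow> C x \<inter> C y \<noteq> {}"
  using gs4 by blast
lemma glD6: "C x \<inter> C y \<subseteq> C (inf x y) \<inter> C (sup x y)"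
  using gs5 by blast

lemma blk: "fll (C x) (R x)" unfolding fll_def using glD1 .

lemmas b_refl = fll.refl[OF blk] and b_antisym = fll.antisym[OF blk] and b_trans = fll.trans[OF blk]
  and bJ_in = fll.J_in[OF blk] and bJ_ub1 = fll.J_ub1[OF blk] and bJ_ub2 = fll.J_ub2[OF blk]
  and bJ_least = fll.J_least[OF blk] and bJ_absorb = fll.J_absorb[OF blk] and bJ_comm = fll.J_comm[OF blk]
  and bJ_assoc = fll.J_assoc[OF blk] and bJ_eq = fll.J_eq[OF blk] and bJ_lub = fll.J_lub[OF blk]
  and bM_in = fll.M_in[OF blk] and bM_lb1 = fll.M_lb1[OF blk] and bM_lb2 = fll.M_lb2[OF blk]
  and bM_greatest = fll.M_greatest[OF blk] and bM_eq = fll.M_eq[OF blk] and bM_glb = fll.M_glb[OF blk]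
  and bJ_le_iff = fll.J_le_iff[OF blk]

abbreviation jn where "jn x \<equiv> ljoin (C x) (R x)"
abbreviation mt where "mt x \<equiv> lmeet (C x) (R x)"
abbreviation ov where "ov x y \<equiv> C x \<inter> C y \<noteq> {}"

lemma up: assumes "x \<le> y" "a \<in> C x" "a \<in> C y" "b \<in> C x" "R x a b" shows "b \<in> C y"
proof -
  have "is_filter (C x) (R x) (C x \<inter> C y)" using glD2[OF assms(1)] assms(2,3) by blast
  thus ?thesis using assms(2-5) unfolding is_filter_def by blast
qed

lemma down: assumes "x \<le> y" "a \<in> C x" "a \<in> C y" "b \<in> C y" "R y b a" shows "b \<in> C x"
proof -
  have "is_ideal (C y) (R y) (C x \<inter> C y)" using glD3[OF assms(1)] assms(2,3) by blast
  thus ?thesis using assms(2-5) unfolding is_ideal_def by blast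
qed

lemma idl_join: assumes "x \<le> y" "a \<in> C x" "a \<in> C y" "b \<in> C x" "b \<in> C y" shows "jn y a b \<in> C x"
proof -
  have "is_ideal (C y) (R y) (C x \<inter> C y)" using glD3[OF assms(1)] assms(2,3) by blast
  thus ?thesis using assms(2-5) unfolding is_ideal_def by blast
qed

lemma flt_meet: assumes "x \<le> y" "a \<in> C x" "a \<in> C y" "b \<in> C x" "b \<in> C y" shows "mt x a b \<in> C y"
proof -
  have "is_filter (C x) (R x) (C x \<inter> C y)" using glD2[OF assms(1)] assms(2,3) by blast
  thus ?thesis using assms(2-5) unfolding is_filter_def by blast
qed

lemma agree_le: assumes "x \<le> y" "a \<in> C x" "a \<in> C y" "b \<in> C x" "b \<in> C y" shows "R x a b \<longleftrightarrow> R y a b"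
  using glD4[OF assms(1)] assms(2-5) by blast

lemma agree: assumes "a \<in> C x" "a \<in> C y" "b \<in> C x" "b \<in> C y" shows "R x a b \<longleftrightarrow> R y a b"
proof -
  have "a \<in> C (inf x y)" "b \<in> C (inf x y)" using glD6[of x y] assms by blast+
  thus ?thesis using agree_le[of "inf x y" x a b] agree_le[of "inf x y" y a b] assms by simp
qed

definition bo where "bo x = (THE b. b \<in> C x \<and> (\<forall>a\<in>C x. R x b a))"
definition tp where "tp x = (THE b. b \<in> C x \<and> (\<forall>a\<in>C x. R x a b))"

lemma bo_spec: "bo x \<in> C x \<and> (\<forall>a\<in>C x. R x (bo x) a)"
proof -
  obtain t where t: "t \<in> C x" "\<forall>a\<in>C x. R x t a" using fll.has_bot[OF blk] by blast
  have "\<exists>!b. b \<in> C x \<and> (\<forall>a\<in>C x. R x b a)"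
  proof (rule ex1I[of _ t])
    show "t \<in> C x \<and> (\<forall>a\<in>C x. R x t a)" using t by blast
    fix b assume "b \<in> C x \<and> (\<forall>a\<in>C x. R x b a)"
    thus "b = t" using b_antisym t by blast
  qed
  thus ?thesis unfolding bo_def by (rule theI')
qed

lemma tp_spec: "tp x \<in> C x \<and> (\<forall>a\<in>C x. R x a (tp x))"
proof -
  obtain t where t: "t \<in> C x" "\<forall>a\<in>C x. R x a t" using fll.has_top[OF blk] by blast
  have "\<exists>!b. b \<in> C x \<and> (\<forall>a\<in>C x. R x a b)"
  proof (rule ex1I[of _ t])
    show "t \<in> C x \<and> (\<forall>a\<in>C x. R x a t)" using t by blast
    fix b assume "b \<in> C x \<and> (\<forall>a\<in>C x. R x a b)"
    thus "b = t" using b_antisym t by blast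
  qed
  thus ?thesis unfolding tp_def by (rule theI')
qed

lemma bo_in: "bo x \<in> C x" and bo_le: "a \<in> C x \<Longrightarrow> R x (bo x) a"
  using bo_spec by blast+
lemma tp_in: "tp x \<in> C x" and tp_le: "a \<in> C x \<Longrightarrow> R x a (tp x)"
  using tp_spec by blast+

lemma ov_bo: assumes "x \<le> y" "ov x y" shows "bo y \<in> C x"
proof -
  obtain e where e: "e \<in> C x" "e \<in> C y" using assms(2) by blast
  show ?thesis using down[OF assms(1) e bo_in bo_le[OF e(2)]] .
qed

lemma ov_tp: assumes "x \<le> y" "ov x y" shows "tp x \<in> C y"
proof -
  obtain e where e: "e \<in> C x" "e \<in> C y" using assms(2) by blast
  show ?thesis using up[OF assms(1) e tp_in tp_le[OF e(1)]] .
qed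

lemma ov_up: assumes "x \<le> y" "ov x y" "a \<in> C x" "R x (bo y) a" shows "a \<in> C y"
  using up[OF assms(1) ov_bo[OF assms(1,2)] bo_in assms(3,4)] .

lemma ov_bo_le: assumes "a \<in> C x" "a \<in> C y" "bo y \<in> C x" shows "R x (bo y) a"
  using agree[OF bo_in assms(3) assms(2) assms(1)] bo_le[OF assms(2)] by blast

lemma jn_agree_le: assumes "x \<le> y" "a \<in> C x" "a \<in> C y" "b \<in> C x" "b \<in> C y"
  shows "jn x a b = jn y a b"
proof -
  let ?j = "jn y a b"
  have jy: "?j \<in> C y" using bJ_in assms(3,5) by blast
  have jx: "?j \<in> C x" using idl_join[OF assms] .
  have "is_lub (C x) (R x) a b ?j" unfolding is_lub_def
  proof (intro conjI ballI impI)
    show "?j \<in> C x" using jx .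
    show "R x a ?j" using agree[OF assms(2,3) jx jy] bJ_ub1[OF assms(3,5)] by blast
    show "R x b ?j" using agree[OF assms(4,5) jx jy] bJ_ub2[OF assms(3,5)] by blast
    fix w assume wx: "w \<in> C x" and h: "R x a w \<and> R x b w"
    have wy: "w \<in> C y" using up[OF assms(1,2,3) wx] h by blast
    have "R y a w" "R y b w" using agree[OF assms(2,3) wx wy] agree[OF assms(4,5) wx wy] h by blast+
    hence "R y ?j w" using bJ_least[OF assms(3,5) wy] by blast
    thus "R x ?j w" using agree[OF jx jy wx wy] by blast
  qed
  thus ?thesis using bJ_eq assms(2,4) by blast
qed

lemma jn_agree: assumes "a \<in> C x" "a \<in> C y" "b \<in> C x" "b \<in> C y"
  shows "jn x a b = jn y a b"
proof -
  have "a \<in> C (inf x y)" "b \<in> C (inf x y)" using glD6[of x y] assms by blast+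
  thus ?thesis using jn_agree_le[of "inf x y" x a b] jn_agree_le[of "inf x y" y a b] assms by simp
qed

lemma jn_in2: assumes "a \<in> C x" "a \<in> C y" "b \<in> C x" "b \<in> C y" shows "jn x a b \<in> C y"
  using jn_agree[OF assms] bJ_in[OF assms(2,4)] by simp

lemma S_ord: "order_on (UNIV::'s set) (\<le>)" unfolding order_on_def by auto

lemma wfS_lt: "wf {(x::'s,y). x < y}"
proof -
  have "wf {(x,y). x\<in>(UNIV::'s set) \<and> y\<in>UNIV \<and> x \<le> y \<and> x \<noteq> y}" using fl_wf[OF S_ord S_fl] .
  moreover have "{(x::'s,y). x < y} \<subseteq> {(x,y). x\<in>(UNIV::'s set) \<and> y\<in>UNIV \<and> x \<le> y \<and> x \<noteq> y}" by (auto simp: less_le)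
  ultimately show ?thesis using wf_subset by blast
qed

lemma wfS_gt: "wf {(x::'s,y). y < x}"
proof -
  have "wf {(x,y). x\<in>(UNIV::'s set) \<and> y\<in>UNIV \<and> y \<le> x \<and> x \<noteq> y}" using fl_wf'[OF S_ord S_fl] .
  moreover have "{(x::'s,y). y < x} \<subseteq> {(x,y). x\<in>(UNIV::'s set) \<and> y\<in>UNIV \<and> y \<le> x \<and> x \<noteq> y}" by (auto simp: less_le)
  ultimately show ?thesis using wf_subset by blast
qed

lemma S_cover_above: assumes "(x::'s) < y" shows "\<exists>z. scovers x z \<and> z \<le> y"
proof -
  have "y \<in> {z. x < z \<and> z \<le> y}" using assms by simp
  from wf_min[OF wfS_lt this] obtain z where z: "x < z" "z \<le> y"
    and m: "\<And>w. (w, z) \<in> {(x::'s,y). x < y} \<Longrightarrow> w \<notin> {z. x < z \<and> z \<le> y}" by blast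
  have "scovers x z" unfolding scovers_def
  proof (intro conjI notI)
    show "x < z" using z by simp
    assume "\<exists>w. x < w \<and> w < z"
    then obtain w where w: "x < w" "w < z" by blast
    have "w \<le> y" using w(2) z(2) by simp
    hence "w \<in> {z. x < z \<and> z \<le> y}" using w(1) by simp
    moreover have "(w, z) \<in> {(x::'s,y). x < y}" using w(2) by simp
    ultimately show False using m by blast
  qed
  thus ?thesis using z by blast
qed

lemma S_least: assumes "u \<in> X" "\<forall>a\<in>X. \<forall>b\<in>X. inf a b \<in> X" shows "\<exists>m\<in>X. \<forall>a\<in>X. m \<le> (a::'s)"
proof -
  from wf_min[OF wfS_lt assms(1)] obtain m where m: "m \<in> X" and mn: "\<And>w. (w, m) \<in> {(x::'s,y). x < y} \<Longrightarrow> w \<notin> X" by blast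
  have "m \<le> a" if "a \<in> X" for a
  proof (rule ccontr)
    assume "\<not> m \<le> a"
    hence "inf m a < m" by (metis inf.absorb_iff1 inf.cobounded2 inf_le1 order.not_eq_order_implies_strict)
    hence "inf m a \<notin> X" using mn by simp
    thus False using assms(2) m that by blast
  qed
  thus ?thesis using m by blast
qed

lemma S_greatest: assumes "u \<in> X" "\<forall>a\<in>X. \<forall>b\<in>X. sup a b \<in> X" shows "\<exists>m\<in>X. \<forall>a\<in>X. a \<le> (m::'s)"
proof -
  from wf_min[OF wfS_gt assms(1)] obtain m where m: "m \<in> X" and mn: "\<And>w. (w, m) \<in> {(x::'s,y). y < x} \<Longrightarrow> w \<notin> X" by blast
  have "a \<le> m" if "a \<in> X" for a
  proof (rule ccontr)
    assume "\<not> a \<le> m"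
    hence "m < sup m a" by (simp add: less_le_not_le)
    hence "sup m a \<notin> X" using mn by simp
    thus False using assms(2) m that by blast
  qed
  thus ?thesis using m by blast
qed

lemma S_bot: "\<exists>s::'s. \<forall>x. s \<le> x"
proof -
  have "\<exists>m\<in>(UNIV::'s set). \<forall>a\<in>UNIV. m \<le> a" by (rule S_least[of undefined]) simp_all
  thus ?thesis by blast
qed

abbreviation LL where "LL \<equiv> glued_carrier C"

lemma LL_iff: "a \<in> LL \<longleftrightarrow> (\<exists>x. a \<in> C x)" unfolding glued_carrier_def by blast

definition al where "al a = (THE m. a \<in> C m \<and> (\<forall>u. a \<in> C u \<longrightarrow> m \<le> u))"
definition be where "be a = (THE m. a \<in> C m \<and> (\<forall>u. a \<in> C u \<longrightarrow> u \<le> m))"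

lemma al_spec: assumes "a \<in> LL" shows "a \<in> C (al a) \<and> (\<forall>u. a \<in> C u \<longrightarrow> al a \<le> u)"
proof -
  obtain x where x: "a \<in> C x" using assms LL_iff by blast
  have cl: "\<forall>u\<in>{u. a \<in> C u}. \<forall>v\<in>{u. a \<in> C u}. inf u v \<in> {u. a \<in> C u}" using glD6 by blast
  obtain m where m: "a \<in> C m" "\<forall>u. a \<in> C u \<longrightarrow> m \<le> u" using S_least[of x "{u. a \<in> C u}", OF _ cl] x by auto
  have "\<exists>!m. a \<in> C m \<and> (\<forall>u. a \<in> C u \<longrightarrow> m \<le> u)"
    by (rule ex1I[of _ m]) (use m in \<open>auto intro: order.antisym\<close>)
  thus ?thesis unfolding al_def by (rule theI')
qed

lemma be_spec: assumes "a \<in> LL" shows "a \<in> C (be a) \<and> (\<forall>u. a \<in> C u \<longrightarrow> u \<le> be a)"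
proof -
  obtain x where x: "a \<in> C x" using assms LL_iff by blast
  have cl: "\<forall>u\<in>{u. a \<in> C u}. \<forall>v\<in>{u. a \<in> C u}. sup u v \<in> {u. a \<in> C u}" using glD6 by blast
  obtain m where m: "a \<in> C m" "\<forall>u. a \<in> C u \<longrightarrow> u \<le> m" using S_greatest[of x "{u. a \<in> C u}", OF _ cl] x by auto
  have "\<exists>!m. a \<in> C m \<and> (\<forall>u. a \<in> C u \<longrightarrow> u \<le> m)"
    by (rule ex1I[of _ m]) (use m in \<open>auto intro: order.antisym\<close>)
  thus ?thesis unfolding be_def by (rule theI')
qed

lemma al_in: "a \<in> C x \<Longrightarrow> a \<in> C (al a)" and al_le: "a \<in> C x \<Longrightarrow> al a \<le> x"
  using al_spec LL_iff by blast+
lemma be_in: "a \<in> C x \<Longrightarrow> a \<in> C (be a)" and be_ge: "a \<in> C x \<Longrightarrow> x \<le> be a"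
  using be_spec LL_iff by blast+

lemma CV1: assumes "u \<le> z" "z \<le> v" "ov u v" shows "ov u z"
proof -
  have "\<forall>z. u \<le> z \<longrightarrow> z \<le> v \<longrightarrow> ov u z"
  proof (intro allI)
    fix z show "u \<le> z \<longrightarrow> z \<le> v \<longrightarrow> ov u z"
    proof (induction z rule: wf_induct[OF wfS_gt])
      case (1 z)
      show ?case
      proof (intro impI)
        assume uz: "u \<le> z" and zv: "z \<le> v"
        show "ov u z"
        proof (cases "z = v")
          case True thus ?thesis using assms(3) by simp
        next
          case False
          hence "z < v" using zv by simp
          then obtain z' where sc: "scovers z z'" and z'v: "z' \<le> v" using S_cover_above by blast
          have zz': "z < z'" using sc unfolding scovers_def by blast
          have "ov u z'" using "1"[rule_format, of z'] zz' uz z'v by auto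
          moreover have "ov z z'" using glD5[OF sc] .
          ultimately have "bo z' \<in> C u" "bo z' \<in> C z"
            using ov_bo[of u z'] ov_bo[of z z'] uz zz' by auto
          thus ?thesis by blast
        qed
      qed
    qed
  qed
  thus ?thesis using assms by blast
qed

lemma CV_ov2: assumes "u \<le> z" "z \<le> v" "ov u v" shows "ov z v"
proof -
  have "ov u z" using CV1[OF assms] .
  hence "tp u \<in> C z" "tp u \<in> C v" using ov_tp assms order.trans by blast+
  thus ?thesis by blast
qed

lemma CV2: assumes "a \<in> C u" "a \<in> C v" "u \<le> z" "z \<le> v" shows "a \<in> C z"
proof -
  have uv: "u \<le> v" using assms(3,4) by simp
  have ouv: "ov u v" using assms(1,2) by blast
  have ouz: "ov u z" using CV1[OF assms(3,4) ouv] .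
  have ozv: "ov z v" using CV_ov2[OF assms(3,4) ouv] .
  have bvz: "bo v \<in> C z" using ov_bo[OF assms(4) ozv] .
  have bvu: "bo v \<in> C u" using ov_bo[OF uv ouv] .
  have bzu: "bo z \<in> C u" using ov_bo[OF assms(3) ouz] .
  have "R z (bo z) (bo v)" using bo_le[OF bvz] .
  hence r1: "R u (bo z) (bo v)" using agree[OF bzu bo_in bvu bvz] by blast
  have "R v (bo v) a" using bo_le[OF assms(2)] .
  hence r2: "R u (bo v) a" using agree[OF bvu bo_in assms(1,2)] by blast
  have "R u (bo z) a" using b_trans[OF bzu bvu assms(1) r1 r2] .
  thus ?thesis using ov_up[OF assms(3) ouz assms(1)] by blast
qed

lemma conv_ab: assumes "a \<in> LL" "al a \<le> z" "z \<le> be a" shows "a \<in> C z"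
  using CV2[OF _ _ assms(2,3)] al_spec[OF assms(1)] be_spec[OF assms(1)] by blast

end


lemma (in fll) J_self_distrib:
  assumes "a\<in>A" "b\<in>A" "c\<in>A" shows "J (J a b) c = J (J a c) (J b c)"
proof -
  have i1: "J (J a b) c \<in> A" "J (J a c) (J b c) \<in> A" using assms by (simp_all add: J_in)
  have e1: "le (J (J a b) c) w \<longleftrightarrow> le a w \<and> le b w \<and> le c w" if "w\<in>A" for w using assms that by (simp add: J_in J_le_iff)
  have e2: "le (J (J a c) (J b c)) w \<longleftrightarrow> le a w \<and> le b w \<and> le c w" if "w\<in>A" for w using assms that by (auto simp add: J_in J_le_iff)
  show ?thesis using e1[OF i1(2)] e2[OF i1(1)] e1[OF i1(1)] e2[OF i1(2)] refl[OF i1(1)] refl[OF i1(2)] antisym[OF i1] by blast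
qed

context glued begin

lemmas bJ_sd = fll.J_self_distrib[OF blk]

abbreviation st where "st \<equiv> (\<lambda>a b. \<exists>x. a \<in> C x \<and> b \<in> C x \<and> R x a b)"

definition Zs where "Zs x y = {z. x \<le> z \<and> z \<le> y \<and> ov x z}"
definition mx where "mx x y = (THE m. m \<in> Zs x y \<and> (\<forall>z\<in>Zs x y. z \<le> m))"

lemma mx_spec: assumes "x \<le> y" shows "mx x y \<in> Zs x y \<and> (\<forall>z\<in>Zs x y. z \<le> mx x y)"
proof -
  have x: "x \<in> Zs x y" unfolding Zs_def using assms bo_in by blast
  have cl: "\<forall>a\<in>Zs x y. \<forall>b\<in>Zs x y. sup a b \<in> Zs x y"
  proof (intro ballI)
    fix a b assume a: "a \<in> Zs x y" and b: "b \<in> Zs x y"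
    have "tp x \<in> C a" "tp x \<in> C b" using a b ov_tp unfolding Zs_def by blast+
    hence "tp x \<in> C (sup a b)" using glD6 by blast
    moreover have "x \<le> sup a b" "sup a b \<le> y" using a b unfolding Zs_def by (auto intro: le_supI1)
    ultimately show "sup a b \<in> Zs x y" using tp_in unfolding Zs_def by blast
  qed
  obtain m where m: "m \<in> Zs x y" "\<forall>z\<in>Zs x y. z \<le> m" using S_greatest[OF x cl] by blast
  have "\<exists>!m. m \<in> Zs x y \<and> (\<forall>z\<in>Zs x y. z \<le> m)"
    by (rule ex1I[of _ m]) (use m in \<open>auto intro: order.antisym\<close>)
  thus ?thesis unfolding mx_def by (rule theI')
qed

lemma mx_ge: "x \<le> y \<Longrightarrow> x \<le> mx x y" and mx_le: "x \<le> y \<Longrightarrow> mx x y \<le> y"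
  and mx_ov: "x \<le> y \<Longrightarrow> ov x (mx x y)"
  using mx_spec unfolding Zs_def by blast+

lemma mx_max: "x \<le> z \<Longrightarrow> z \<le> y \<Longrightarrow> ov x z \<Longrightarrow> z \<le> mx x y"
  using mx_spec[of x y] unfolding Zs_def by auto

lemma mx_gt: assumes "x < y" shows "x < mx x y"
proof -
  obtain z where sc: "scovers x z" and zy: "z \<le> y" using S_cover_above[OF assms] by blast
  have xz: "x < z" using sc unfolding scovers_def by blast
  have "z \<le> mx x y" using mx_max[of x z y] xz zy glD5[OF sc] by simp
  thus ?thesis using xz by simp
qed

definition ps where "ps x z r = jn x r (bo z)"

lemma ps_in: assumes "x \<le> z" "ov x z" "r \<in> C x" shows "ps x z r \<in> C x" "ps x z r \<in> C z"
proof -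
  have b: "bo z \<in> C x" using ov_bo[OF assms(1,2)] .
  show i: "ps x z r \<in> C x" unfolding ps_def using bJ_in[OF assms(3) b] .
  have "R x (bo z) (ps x z r)" unfolding ps_def using bJ_ub2[OF assms(3) b] .
  thus "ps x z r \<in> C z" using ov_up[OF assms(1,2) i] by blast
qed

lemma ps_ge: assumes "x \<le> z" "ov x z" "r \<in> C x" shows "R x r (ps x z r)"
  unfolding ps_def using bJ_ub1[OF assms(3) ov_bo[OF assms(1,2)]] .

lemma ps_id: assumes "x \<le> z" "r \<in> C x" "r \<in> C z" shows "ps x z r = r"
proof -
  have ov: "ov x z" using assms by blast
  have b: "bo z \<in> C x" using ov_bo[OF assms(1) ov] .
  have "R x (bo z) r" using ov_bo_le[OF assms(2,3) b] .
  thus ?thesis unfolding ps_def using bJ_comm[OF assms(2) b] bJ_absorb[OF b assms(2)] by simp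
qed

lemma ps_mono: assumes "x \<le> z" "ov x z" "r \<in> C x" "r' \<in> C x" "R x r r'" shows "R x (ps x z r) (ps x z r')"
proof -
  have b: "bo z \<in> C x" using ov_bo[OF assms(1,2)] .
  have p: "ps x z r' \<in> C x" using ps_in[OF assms(1,2,4)] by blast
  have "R x r (ps x z r')" using b_trans[OF assms(3,4) p assms(5) ps_ge[OF assms(1,2,4)]] .
  moreover have "R x (bo z) (ps x z r')" unfolding ps_def using bJ_ub2[OF assms(4) b] .
  ultimately show ?thesis unfolding ps_def using bJ_least[OF assms(3) b] p[unfolded ps_def] by blast
qed

lemma ps_join: assumes "x \<le> z" "ov x z" "r \<in> C x" "r' \<in> C x"
  shows "ps x z (jn x r r') = jn x (ps x z r) (ps x z r')"
  unfolding ps_def using bJ_sd[OF assms(3,4) ov_bo[OF assms(1,2)]] .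

lemma ps_trans: assumes "x \<le> z" "z \<le> w" "ov x w" "r \<in> C x"
  shows "ps z w (ps x z r) = ps x w r"
proof -
  have oxz: "ov x z" using CV1[OF assms(1,2,3)] .
  have ozw: "ov z w" using CV_ov2[OF assms(1,2,3)] .
  have xw: "x \<le> w" using assms(1,2) by simp
  have s: "ps x z r \<in> C x" "ps x z r \<in> C z" using ps_in[OF assms(1) oxz assms(4)] by blast+
  have bwx: "bo w \<in> C x" using ov_bo[OF xw assms(3)] .
  have bwz: "bo w \<in> C z" using ov_bo[OF assms(2) ozw] .
  have bzx: "bo z \<in> C x" using ov_bo[OF assms(1) oxz] .
  have "R z (bo z) (bo w)" using bo_le[OF bwz] .
  hence bb: "R x (bo z) (bo w)" using agree[OF bzx bo_in bwx bwz] by blast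
  have "ps z w (ps x z r) = jn z (ps x z r) (bo w)" unfolding ps_def ..
  also have "\<dots> = jn x (ps x z r) (bo w)" using jn_agree[OF s(2) s(1) bwz bwx] .
  also have "\<dots> = jn x r (jn x (bo z) (bo w))" unfolding ps_def using bJ_assoc[OF assms(4) bzx bwx] .
  also have "\<dots> = ps x w r" unfolding ps_def using bJ_absorb[OF bzx bwx bb] by simp
  finally show ?thesis .
qed

inductive canr :: "'s \<Rightarrow> 's \<Rightarrow> 'a \<Rightarrow> 'a \<Rightarrow> bool" where
  cb: "\<not> x < y \<Longrightarrow> canr y x r r"
| cs: "x < y \<Longrightarrow> canr y (mx x y) (ps x (mx x y) r) r' \<Longrightarrow> canr y x r r'"

lemma canr_ex: "\<forall>r. \<exists>r'. canr y x r r'"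
proof (induction x rule: wf_induct[OF wfS_gt])
  case (1 x)
  show ?case
  proof
    fix r show "\<exists>r'. canr y x r r'"
    proof (cases "x < y")
      case False thus ?thesis using cb by blast
    next
      case True
      have "(mx x y, x) \<in> {(x, y). y < x}" using mx_gt[OF True] by simp
      then obtain r' where "canr y (mx x y) (ps x (mx x y) r) r'" using "1" by blast
      thus ?thesis using cs[OF True] by blast
    qed
  qed
qed

lemma canr_un: "canr y x r r1 \<Longrightarrow> canr y x r r2 \<Longrightarrow> r1 = r2"
proof (induction arbitrary: r2 rule: canr.induct)
  case (cb x y r)
  from cb.prems show ?case
  proof (cases rule: canr.cases)
    case cb thus ?thesis by simp
  next
    case cs thus ?thesis using cb.hyps by simp
  qed
next
  case (cs x y r r')
  from cs.prems show ?case
  proof (cases rule: canr.cases)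
    case cb thus ?thesis using cs.hyps(1) by simp
  next
    case cs2: cs
    show ?thesis using cs.IH cs2(2) by blast
  qed
qed

definition can where "can y x r = (THE r'. canr y x r r')"

lemma can_canr: "canr y x r (can y x r)"
proof -
  have "\<exists>!r'. canr y x r r'" using canr_ex canr_un by blast
  thus ?thesis unfolding can_def by (rule theI')
qed

lemma can_base: "\<not> x < y \<Longrightarrow> can y x r = r"
  using canr_un[OF can_canr cb] by blast

lemma can_step: "x < y \<Longrightarrow> can y x r = can y (mx x y) (ps x (mx x y) r)"
  using canr_un[OF can_canr cs[OF _ can_canr]] by blast

end


context glued begin

lemma mx_facts: assumes "x < y"
  shows "x \<le> mx x y" "mx x y \<le> y" "ov x (mx x y)" "(mx x y, x) \<in> {(x, y). y < x}"
  using mx_ge[of x y] mx_le[of x y] mx_ov[of x y] mx_gt[OF assms] assms by auto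

lemma K1: "\<forall>r. x \<le> y \<longrightarrow> r \<in> C x \<longrightarrow> can y x r \<in> C y \<and> st\<^sup>*\<^sup>* r (can y x r)"
proof (induction x rule: wf_induct[OF wfS_gt])
  case (1 x)
  show ?case
  proof (intro allI impI)
    fix r assume xy: "x \<le> y" and r: "r \<in> C x"
    show "can y x r \<in> C y \<and> st\<^sup>*\<^sup>* r (can y x r)"
    proof (cases "x < y")
      case False
      hence "x = y" using xy by simp
      thus ?thesis using can_base[OF False] r by simp
    next
      case True
      note m = mx_facts[OF True]
      let ?m = "mx x y" let ?s = "ps x (mx x y) r"
      have s: "?s \<in> C x" "?s \<in> C ?m" using ps_in[OF m(1,3) r] by blast+
      have IH: "can y ?m ?s \<in> C y \<and> st\<^sup>*\<^sup>* ?s (can y ?m ?s)"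
        using "1"[rule_format, OF m(4) m(2) s(2)] .
      have "st r ?s" using r s(1) ps_ge[OF m(1,3) r] by blast
      hence "st\<^sup>*\<^sup>* r (can y ?m ?s)" using IH converse_rtranclp_into_rtranclp[of st r ?s] by blast
      thus ?thesis using IH can_step[OF True] by simp
    qed
  qed
qed

lemma can_in: "x \<le> y \<Longrightarrow> r \<in> C x \<Longrightarrow> can y x r \<in> C y" using K1 by blast
lemma can_reach: "x \<le> y \<Longrightarrow> r \<in> C x \<Longrightarrow> st\<^sup>*\<^sup>* r (can y x r)" using K1 by blast

lemma K2: "\<forall>z r. x \<le> z \<longrightarrow> z \<le> y \<longrightarrow> ov x z \<longrightarrow> r \<in> C x \<longrightarrow> can y z (ps x z r) = can y x r"
proof (induction x rule: wf_induct[OF wfS_gt])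
  case (1 x)
  show ?case
  proof (intro allI impI)
    fix z r assume xz: "x \<le> z" and zy: "z \<le> y" and oxz: "ov x z" and r: "r \<in> C x"
    show "can y z (ps x z r) = can y x r"
    proof (cases "z = x")
      case True
      thus ?thesis using ps_id[of x x r] r by simp
    next
      case False
      hence xz': "x < z" using xz by simp
      hence True: "x < y" using zy by simp
      note m = mx_facts[OF True]
      let ?m = "mx x y" let ?s = "ps x z r"
      have zm: "z \<le> ?m" using mx_max[OF xz zy oxz] .
      have s: "?s \<in> C z" using ps_in[OF xz oxz r] by blast
      have ozm: "ov z ?m" using CV_ov2[OF xz zm m(3)] .
      have "(z, x) \<in> {(x, y). y < x}" using xz' by simp
      hence "can y ?m (ps z ?m ?s) = can y z ?s"
        using "1"[rule_format, of z ?m ?s] zm m(2) ozm s by blast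
      moreover have "ps z ?m ?s = ps x ?m r" using ps_trans[OF xz zm m(3) r] .
      ultimately show ?thesis using can_step[OF True] by simp
    qed
  qed
qed

lemma can_stepinv: "x \<le> z \<Longrightarrow> z \<le> y \<Longrightarrow> ov x z \<Longrightarrow> r \<in> C x \<Longrightarrow> can y z (ps x z r) = can y x r"
  using K2 by blast

lemma K3: "\<forall>r r'. x \<le> y \<longrightarrow> r \<in> C x \<longrightarrow> r' \<in> C x \<longrightarrow> R x r r' \<longrightarrow> R y (can y x r) (can y x r')"
proof (induction x rule: wf_induct[OF wfS_gt])
  case (1 x)
  show ?case
  proof (intro allI impI)
    fix r r' assume xy: "x \<le> y" and r: "r \<in> C x" and r': "r' \<in> C x" and rr: "R x r r'"
    show "R y (can y x r) (can y x r')"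
    proof (cases "x < y")
      case False
      hence "x = y" using xy by simp
      thus ?thesis using can_base[OF False] rr by simp
    next
      case True
      note m = mx_facts[OF True]
      let ?m = "mx x y" let ?s = "ps x (mx x y) r" let ?s' = "ps x (mx x y) r'"
      have s: "?s \<in> C x" "?s \<in> C ?m" using ps_in[OF m(1,3) r] by blast+
      have s': "?s' \<in> C x" "?s' \<in> C ?m" using ps_in[OF m(1,3) r'] by blast+
      have "R x ?s ?s'" using ps_mono[OF m(1,3) r r' rr] .
      hence "R ?m ?s ?s'" using agree[OF s s'] by blast
      hence "R y (can y ?m ?s) (can y ?m ?s')" using "1"[rule_format, OF m(4) m(2) s(2) s'(2)] by blast
      thus ?thesis using can_step[OF True] by simp
    qed
  qed
qed

lemma can_mono: "x \<le> y \<Longrightarrow> r \<in> C x \<Longrightarrow> r' \<in> C x \<Longrightarrow> R x r r' \<Longrightarrow> R y (can y x r) (can y x r')"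
  using K3 by blast

lemma K4: "\<forall>r r'. x \<le> y \<longrightarrow> r \<in> C x \<longrightarrow> r' \<in> C x \<longrightarrow> can y x (jn x r r') = jn y (can y x r) (can y x r')"
proof (induction x rule: wf_induct[OF wfS_gt])
  case (1 x)
  show ?case
  proof (intro allI impI)
    fix r r' assume xy: "x \<le> y" and r: "r \<in> C x" and r': "r' \<in> C x"
    show "can y x (jn x r r') = jn y (can y x r) (can y x r')"
    proof (cases "x < y")
      case False
      hence "x = y" using xy by simp
      thus ?thesis using can_base[OF False] by simp
    next
      case True
      note m = mx_facts[OF True]
      let ?m = "mx x y" let ?s = "ps x (mx x y) r" let ?s' = "ps x (mx x y) r'"
      have s: "?s \<in> C x" "?s \<in> C ?m" using ps_in[OF m(1,3) r] by blast+
      have s': "?s' \<in> C x" "?s' \<in> C ?m" using ps_in[OF m(1,3) r'] by blast+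
      have "can y x (jn x r r') = can y ?m (ps x ?m (jn x r r'))" using can_step[OF True] .
      also have "ps x ?m (jn x r r') = jn ?m ?s ?s'"
        using ps_join[OF m(1,3) r r'] jn_agree[OF s(1,2) s'(1,2)] by simp
      also have "can y ?m (jn ?m ?s ?s') = jn y (can y ?m ?s) (can y ?m ?s')"
        using "1"[rule_format, OF m(4) m(2) s(2) s'(2)] .
      finally show ?thesis using can_step[OF True, of r] can_step[OF True, of r'] by simp
    qed
  qed
qed

lemma can_join: "x \<le> y \<Longrightarrow> r \<in> C x \<Longrightarrow> r' \<in> C x \<Longrightarrow> can y x (jn x r r') = jn y (can y x r) (can y x r')"
  using K4 by blast

lemma can_id: assumes "x \<le> y" "r \<in> C x" "r \<in> C y" shows "can y x r = r"
proof -
  have "can y y (ps x y r) = can y x r" using can_stepinv[OF assms(1) order.refl _ assms(2)] assms by blast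
  thus ?thesis using ps_id[OF assms] can_base[of y y r] by simp
qed

lemma can_cons: assumes "r \<in> C x" "r \<in> C x'" "x \<le> y" "x' \<le> y" shows "can y x r = can y x' r"
proof -
  let ?w = "inf x x'"
  have rw: "r \<in> C ?w" using glD6 assms(1,2) by blast
  have "can y x (ps ?w x r) = can y ?w r" using can_stepinv[of ?w x y r] rw assms by auto
  moreover have "can y x' (ps ?w x' r) = can y ?w r" using can_stepinv[of ?w x' y r] rw assms by auto
  moreover have "ps ?w x r = r" "ps ?w x' r = r" using ps_id rw assms(1,2) by auto
  ultimately show ?thesis by simp
qed

lemma K7: "\<forall>r. x \<le> y \<longrightarrow> y \<le> v \<longrightarrow> r \<in> C x \<longrightarrow> can v y (can y x r) = can v x r"
proof (induction x rule: wf_induct[OF wfS_gt])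
  case (1 x)
  show ?case
  proof (intro allI impI)
    fix r assume xy: "x \<le> y" and yv: "y \<le> v" and r: "r \<in> C x"
    show "can v y (can y x r) = can v x r"
    proof (cases "x < y")
      case False
      hence "x = y" using xy by simp
      thus ?thesis using can_base[OF False] by simp
    next
      case True
      note m = mx_facts[OF True]
      let ?m = "mx x y" let ?s = "ps x (mx x y) r"
      have s: "?s \<in> C ?m" using ps_in[OF m(1,3) r] by blast
      have "can v y (can y ?m ?s) = can v ?m ?s" using "1"[rule_format, OF m(4) m(2) yv s] .
      moreover have "can v ?m ?s = can v x r" using can_stepinv[OF m(1) _ m(3) r] m(2) yv by simp
      ultimately show ?thesis using can_step[OF True] by simp
    qed
  qed
qed

lemma can_trans: "x \<le> y \<Longrightarrow> y \<le> v \<Longrightarrow> r \<in> C x \<Longrightarrow> can v y (can y x r) = can v x r"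
  using K7 by blast

lemma K8: "x \<le> y \<longrightarrow> can y x (bo x) = bo y"
proof (induction x rule: wf_induct[OF wfS_gt])
  case (1 x)
  show ?case
  proof (intro impI)
    assume xy: "x \<le> y"
    show "can y x (bo x) = bo y"
    proof (cases "x < y")
      case False
      hence "x = y" using xy by simp
      thus ?thesis using can_base[OF False] by simp
    next
      case True
      note m = mx_facts[OF True]
      let ?m = "mx x y"
      have bm: "bo ?m \<in> C x" using ov_bo[OF m(1,3)] .
      have "ps x ?m (bo x) = bo ?m" unfolding ps_def using bJ_absorb[OF bo_in bm bo_le[OF bm]] .
      moreover have "can y ?m (bo ?m) = bo y" using "1"[rule_format, OF m(4) m(2)] .
      ultimately show ?thesis using can_step[OF True] by simp
    qed
  qed
qed

lemma can_bot: "x \<le> y \<Longrightarrow> can y x (bo x) = bo y" using K8 by blast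

end


context glued begin

abbreviation gle where "gle \<equiv> glued_le C R"

lemma gle_eq: "gle = st\<^sup>+\<^sup>+" unfolding glued_le_def ..

definition pi where "pi y a = can y (al a) a"

lemma st_L: "st a b \<Longrightarrow> a \<in> LL \<and> b \<in> LL" unfolding glued_carrier_def by blast

lemma gle_L: "gle a b \<Longrightarrow> a \<in> LL \<and> b \<in> LL"
  unfolding gle_eq by (induction rule: tranclp_induct) (use st_L in blast)+

lemma ST1: assumes "st a b" shows "a \<in> C (al b) \<and> R (al b) a b"
proof -
  obtain x where x: "a \<in> C x" "b \<in> C x" "R x a b" using assms by blast
  have v: "al b \<le> x" "b \<in> C (al b)" using al_le[OF x(2)] al_in[OF x(2)] by blast+
  have a: "a \<in> C (al b)" using down[OF v(1) v(2) x(2) x(1) x(3)] .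
  thus ?thesis using agree[OF x(1) a x(2) v(2)] x(3) by blast
qed

lemma ST2: assumes "st a b" shows "b \<in> C (be a) \<and> R (be a) a b"
proof -
  obtain x where x: "a \<in> C x" "b \<in> C x" "R x a b" using assms by blast
  have v: "x \<le> be a" "a \<in> C (be a)" using be_ge[OF x(1)] be_in[OF x(1)] by blast+
  have b: "b \<in> C (be a)" using up[OF v(1) x(1) v(2) x(2) x(3)] .
  thus ?thesis using agree[OF x(1) v(2) x(2) b] x(3) by blast
qed

lemma st_mono: assumes "st a b" shows "al a \<le> al b" "be a \<le> be b"
proof -
  show "al a \<le> al b" using ST1[OF assms] al_le by blast
  show "be a \<le> be b" using ST2[OF assms] be_ge by blast
qed

lemma gle_mono: assumes "gle a b" shows "al a \<le> al b \<and> be a \<le> be b"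
  using assms unfolding gle_eq
  by (induction rule: tranclp_induct) (use st_mono order.trans in blast)+

lemma pi_in: "a \<in> LL \<Longrightarrow> al a \<le> y \<Longrightarrow> pi y a \<in> C y"
  unfolding pi_def using can_in al_spec by blast

lemma pi_self: assumes "a \<in> C y" shows "pi y a = a"
proof -
  have "pi y a = can y y a" unfolding pi_def using can_cons[of a "al a" y y] al_in[OF assms] al_le[OF assms] assms by simp
  thus ?thesis using can_base[of y y a] by simp
qed

lemma MC1: assumes "gle a c" "c \<in> C y" shows "al a \<le> y \<and> R y (pi y a) c"
  using assms(1) unfolding gle_eq
proof (induction rule: converse_tranclp_induct)
  case (base a)
  let ?v = "al c"
  have av: "a \<in> C ?v" "R ?v a c" using ST1[OF base] by blast+
  have vy: "?v \<le> y" using al_le[OF assms(2)] .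
  have aL: "a \<in> LL" using av LL_iff by blast
  have ala: "al a \<le> ?v" using al_le[OF av(1)] .
  have "pi y a = can y ?v a" unfolding pi_def using can_cons[OF al_in[OF av(1)] av(1)] ala vy by simp
  moreover have "R y (can y ?v a) (can y ?v c)" using can_mono[OF vy av(1) al_in[OF assms(2)] av(2)] .
  moreover have "can y ?v c = c" using can_id[OF vy al_in[OF assms(2)] assms(2)] .
  ultimately show ?case using ala vy by simp
next
  case (step a e)
  let ?v = "al e"
  have av: "a \<in> C ?v" "R ?v a e" using ST1[OF step(1)] by blast+
  have eL: "e \<in> LL" using st_L[OF step(1)] by blast
  have vy: "?v \<le> y" using step(3) by blast
  have ala: "al a \<le> ?v" using al_le[OF av(1)] .
  have ev: "e \<in> C ?v" using al_spec[OF eL] by blast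
  have "pi y a = can y ?v a" unfolding pi_def using can_cons[OF al_in[OF av(1)] av(1)] ala vy by simp
  moreover have "R y (can y ?v a) (can y ?v e)" using can_mono[OF vy av(1) ev av(2)] .
  moreover have "can y ?v e = pi y e" unfolding pi_def ..
  moreover have "can y ?v a \<in> C y" using can_in[OF vy av(1)] .
  moreover have "pi y e \<in> C y" using pi_in[OF eL vy] .
  ultimately have "R y (pi y a) c" using b_trans[of "pi y a" y "pi y e" c] step(3) assms(2) by simp
  thus ?case using ala vy by simp
qed

lemma MC2: assumes "a \<in> LL" "c \<in> C y" "al a \<le> y" "R y (pi y a) c" shows "gle a c"
proof -
  have "st\<^sup>*\<^sup>* a (pi y a)" unfolding pi_def using can_reach[OF assms(3)] al_spec[OF assms(1)] by blast
  moreover have "st (pi y a) c" using pi_in[OF assms(1,3)] assms(2,4) by blast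
  ultimately show ?thesis unfolding gle_eq by (rule rtranclp_into_tranclp1)
qed

lemma C1: assumes "a \<in> C y" "c \<in> C y" shows "gle a c \<longleftrightarrow> R y a c"
proof
  assume "gle a c" thus "R y a c" using MC1[OF _ assms(2)] pi_self[OF assms(1)] by metis
next
  assume "R y a c"
  hence "st a c" using assms by blast
  thus "gle a c" unfolding gle_eq by blast
qed

lemma gle_antisym: assumes "gle a b" "gle b a" shows "a = b"
proof -
  have aL: "a \<in> LL" and bL: "b \<in> LL" using gle_L assms by blast+
  have "al a \<le> al b" "al b \<le> al a" using gle_mono assms by blast+
  hence e: "al a = al b" by simp
  have a: "a \<in> C (al b)" and b: "b \<in> C (al b)" using al_spec aL bL e by metis+
  have "R (al b) a b" "R (al b) b a" using C1[OF a b] C1[OF b a] assms by blast+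
  thus ?thesis using b_antisym a b by blast
qed

lemma gle_refl: "a \<in> LL \<Longrightarrow> gle a a"
  using C1 al_spec b_refl by blast

lemma gle_trans: "gle a b \<Longrightarrow> gle b c \<Longrightarrow> gle a c"
  unfolding gle_eq by (rule tranclp_trans)

lemma L_lub: assumes aL: "a \<in> LL" and bL: "b \<in> LL"
  shows "is_lub LL gle a b (jn (sup (al a) (al b)) (pi (sup (al a) (al b)) a) (pi (sup (al a) (al b)) b))"
proof -
  define y where "y = sup (al a) (al b)"
  define pa where "pa = pi y a"
  define pb where "pb = pi y b"
  define j where "j = jn y pa pb"
  have ay: "al a \<le> y" and by': "al b \<le> y" unfolding y_def by simp_all
  have pa: "pa \<in> C y" using pi_in[OF aL ay] pa_def by simp
  have pb: "pb \<in> C y" using pi_in[OF bL by'] pb_def by simp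
  have jy: "j \<in> C y" using bJ_in[OF pa pb] j_def by simp
  have jL: "j \<in> LL" using jy LL_iff by blast
  have "is_lub LL gle a b j" unfolding is_lub_def
  proof (intro conjI ballI impI)
    show "j \<in> LL" using jL .
    show "gle a j" using MC2[OF aL jy ay] bJ_ub1[OF pa pb] pa_def j_def by simp
    show "gle b j" using MC2[OF bL jy by'] bJ_ub2[OF pa pb] pb_def j_def by simp
    fix w assume wL: "w \<in> LL" and h: "gle a w \<and> gle b w"
    let ?v = "al w"
    have wv: "w \<in> C ?v" using al_spec[OF wL] by blast
    have m1: "al a \<le> ?v \<and> R ?v (pi ?v a) w" using MC1[OF _ wv] h by blast
    have m2: "al b \<le> ?v \<and> R ?v (pi ?v b) w" using MC1[OF _ wv] h by blast
    have yv: "y \<le> ?v" unfolding y_def using m1 m2 by simp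
    have e1: "pi ?v a = can ?v y pa" unfolding pa_def pi_def using can_trans[OF ay yv] al_spec[OF aL] by simp
    have e2: "pi ?v b = can ?v y pb" unfolding pb_def pi_def using can_trans[OF by' yv] al_spec[OF bL] by simp
    have cj: "can ?v y j = jn ?v (can ?v y pa) (can ?v y pb)" using can_join[OF yv pa pb] j_def by simp
    have "R ?v (can ?v y j) w" using cj bJ_least[OF can_in[OF yv pa] can_in[OF yv pb] wv] m1 m2 e1 e2 by simp
    moreover have "pi ?v j = can ?v y j"
      unfolding pi_def using can_cons[OF al_in[OF jy] jy] al_le[OF jy] yv by simp
    moreover have "al j \<le> ?v" using al_le[OF jy] yv by simp
    ultimately show "gle j w" using MC2[OF jL wv] by simp
  qed
  thus ?thesis unfolding y_def pa_def pb_def j_def .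
qed

lemma blk_lub: assumes b: "b \<in> C u" and c: "c \<in> C u" shows "is_lub LL gle b c (jn u b c)"
proof -
  let ?y = "sup (al b) (al c)"
  have yu: "?y \<le> u" using al_le[OF b] al_le[OF c] by simp
  have by': "b \<in> C ?y" using CV2[OF al_in[OF b] b _ yu] by simp
  have cy: "c \<in> C ?y" using CV2[OF al_in[OF c] c _ yu] by simp
  have "jn u b c = jn ?y b c" using jn_agree[OF b by' c cy] .
  also have "\<dots> = jn ?y (pi ?y b) (pi ?y c)" using pi_self[OF by'] pi_self[OF cy] by simp
  finally show ?thesis using L_lub b c LL_iff by (metis)
qed

lemma blk_glb: assumes b: "b \<in> C u" and c: "c \<in> C u" shows "is_glb LL gle b c (mt u b c)"
  unfolding is_glb_def
proof (intro conjI ballI impI)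
  have m: "mt u b c \<in> C u" using bM_in[OF b c] .
  show "mt u b c \<in> LL" using m LL_iff by blast
  show "gle (mt u b c) b" using C1[OF m b] bM_lb1[OF b c] by blast
  show "gle (mt u b c) c" using C1[OF m c] bM_lb2[OF b c] by blast
  fix w assume wL: "w \<in> LL" and h: "gle w b \<and> gle w c"
  have h1: "al w \<le> u" "R u (pi u w) b" using MC1[OF _ b] h by blast+
  have h2: "R u (pi u w) c" using MC1[OF _ c] h by blast
  have "R u (pi u w) (mt u b c)" using bM_greatest[OF b c pi_in[OF wL h1(1)]] h1(2) h2 by blast
  thus "gle w (mt u b c)" using MC2[OF wL m h1(1)] by blast
qed

lemma L_bot: "\<exists>B\<in>LL. \<forall>a\<in>LL. gle B a"
proof -
  obtain s0 :: 's where s0: "\<forall>x. s0 \<le> x" using S_bot by blast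
  let ?B = "bo s0"
  have BL: "?B \<in> LL" using bo_in LL_iff by blast
  have "gle ?B a" if aL: "a \<in> LL" for a
  proof -
    obtain x where ax: "a \<in> C x" using aL LL_iff by blast
    have alB: "al ?B \<le> x" using al_le[OF bo_in] s0 order.trans by blast
    have "pi x ?B = can x s0 ?B" unfolding pi_def using can_cons[OF al_in[OF bo_in] bo_in] alB s0 by blast
    also have "\<dots> = bo x" using can_bot s0 by blast
    finally show ?thesis using MC2[OF BL ax alB] bo_le[OF ax] by simp
  qed
  thus ?thesis using BL by blast
qed

lemma L_order: "order_on LL gle"
  unfolding order_on_def using gle_refl gle_antisym gle_trans by blast

lemma L_fin: "finite_length LL gle"
  unfolding finite_length_def
proof (intro allI impI)
  fix Ch assume h: "Ch \<subseteq> LL \<and> (\<forall>a\<in>Ch. \<forall>b\<in>Ch. gle a b \<or> gle b a)"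
  have "finite (al ` Ch)"
  proof -
    have "\<forall>u\<in>al ` Ch. \<forall>v\<in>al ` Ch. u \<le> v \<or> v \<le> u" using h gle_mono by blast
    thus ?thesis using S_fl unfolding finite_length_def by blast
  qed
  moreover have "finite {a\<in>Ch. al a = v}" for v
  proof -
    have sub: "{a\<in>Ch. al a = v} \<subseteq> C v" using h al_spec by blast
    have "\<forall>a\<in>{a\<in>Ch. al a = v}. \<forall>b\<in>{a\<in>Ch. al a = v}. R v a b \<or> R v b a"
      using h sub C1 by blast
    thus ?thesis using fll.fin[OF blk] sub unfolding finite_length_def by blast
  qed
  moreover have "Ch \<subseteq> (\<Union>v\<in>al ` Ch. {a\<in>Ch. al a = v})" by blast
  ultimately show "finite Ch" by (meson finite_UN_I finite_subset)
qed

lemma L_glb_ex: assumes aL: "a \<in> LL" and bL: "b \<in> LL" shows "\<exists>z. is_glb LL gle a b z"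
proof -
  let ?LB = "{l\<in>LL. gle l a \<and> gle l b}"
  obtain B where B: "B \<in> LL" "\<forall>x\<in>LL. gle B x" using L_bot by blast
  have "B \<in> ?LB" using B aL bL by blast
  from wf_min[OF fl_wf'[OF L_order L_fin] this] obtain m where m: "m \<in> ?LB"
    and mx: "\<And>y. (y, m) \<in> {(x,y). x\<in>LL \<and> y\<in>LL \<and> gle y x \<and> x \<noteq> y} \<Longrightarrow> y \<notin> ?LB" by blast
  have "gle l m" if l: "l \<in> ?LB" for l
  proof -
    let ?j = "jn (sup (al m) (al l)) (pi (sup (al m) (al l)) m) (pi (sup (al m) (al l)) l)"
    have lub: "is_lub LL gle m l ?j" using L_lub m l by blast
    have jL: "?j \<in> LL" and mj: "gle m ?j" and lj: "gle l ?j" using lub unfolding is_lub_def by blast+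
    have "gle ?j a" using lub aL m l unfolding is_lub_def by blast
    moreover have "gle ?j b" using lub bL m l unfolding is_lub_def by blast
    ultimately have jLB: "?j \<in> ?LB" using jL by blast
    have "?j = m"
    proof (rule ccontr)
      assume "?j \<noteq> m"
      hence "(?j, m) \<in> {(x,y). x\<in>LL \<and> y\<in>LL \<and> gle y x \<and> x \<noteq> y}" using jL m mj by blast
      thus False using mx jLB by blast
    qed
    thus ?thesis using lj by simp
  qed
  hence "is_glb LL gle a b m" using m unfolding is_glb_def by blast
  thus ?thesis by blast
qed

lemma L_fl: "fl_lattice LL gle"
  unfolding fl_lattice_def lattice_on_def
proof (intro conjI ballI)
  show "order_on LL gle" using L_order .
  show "LL \<noteq> {}" using L_bot by blast
  show "finite_length LL gle" using L_fin .
  fix a b assume "a \<in> LL" "b \<in> LL"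
  thus "\<exists>z. is_lub LL gle a b z" using L_lub by blast
  show "\<exists>z. is_glb LL gle a b z" using L_glb_ex \<open>a \<in> LL\<close> \<open>b \<in> LL\<close> by blast
qed

end


context glued begin

lemma L_fll: "fll LL gle" unfolding fll_def using L_fl .

lemma L_join_eq: assumes "b \<in> C u" "c \<in> C u" shows "ljoin LL gle b c = jn u b c"
  using fll.J_eq[OF L_fll blk_lub[OF assms]] assms LL_iff by blast

lemma L_meet_eq: assumes "b \<in> C u" "c \<in> C u" shows "lmeet LL gle b c = mt u b c"
  using fll.M_eq[OF L_fll blk_glb[OF assms]] assms LL_iff by blast

lemma gle_first: assumes "gle a b" shows "a \<noteq> b \<longrightarrow> (\<exists>e. st a e \<and> e \<noteq> a \<and> (e = b \<or> gle e b))"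
  using assms unfolding gle_eq
proof (induction rule: converse_tranclp_induct)
  case (base y) thus ?case by blast
next
  case (step y z)
  show ?case
  proof (intro impI)
    assume yb: "y \<noteq> b"
    show "\<exists>e. st y e \<and> e \<noteq> y \<and> (e = b \<or> st\<^sup>+\<^sup>+ e b)"
    proof (cases "z = y")
      case True thus ?thesis using step.IH yb by simp
    next
      case False thus ?thesis using step.hyps by blast
    qed
  qed
qed

lemma covL_st: assumes cv: "covers LL gle a b" shows "st a b"
proof -
  have ab: "gle a b" "a \<noteq> b" using cv unfolding covers_def by blast+
  obtain e where e: "st a e" "e \<noteq> a" "e = b \<or> gle e b" using gle_first[OF ab(1)] ab(2) by blast
  have eL: "e \<in> LL" using st_L[OF e(1)] by blast
  have ae: "gle a e" using e(1) unfolding gle_eq by blast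
  have "e = b"
  proof (rule ccontr)
    assume "e \<noteq> b"
    hence "gle e b" using e(3) by blast
    thus False using cv eL ae e(2) \<open>e \<noteq> b\<close> unfolding covers_def by blast
  qed
  thus ?thesis using e(1) by simp
qed

lemma CVX: assumes a: "a \<in> C u" and c: "c \<in> C u" and ae: "gle a e" and ec: "gle e c" shows "e \<in> C u"
proof -
  have eL: "e \<in> LL" using gle_L[OF ae] by blast
  have "al e \<le> u" using gle_mono[OF ec] al_le[OF c] order.trans by blast
  moreover have "u \<le> be e" using gle_mono[OF ae] be_ge[OF a] order.trans by blast
  ultimately show ?thesis using conv_ab[OF eL] by blast
qed

lemma covB2L: assumes cv: "covers (C u) (R u) a b" shows "covers LL gle a b"
proof -
  have a: "a \<in> C u" and b: "b \<in> C u" and ab: "R u a b" "a \<noteq> b" using cv unfolding covers_def by blast+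
  have nz: "\<not> (\<exists>z\<in>LL. gle a z \<and> gle z b \<and> z \<noteq> a \<and> z \<noteq> b)"
  proof
    assume "\<exists>z\<in>LL. gle a z \<and> gle z b \<and> z \<noteq> a \<and> z \<noteq> b"
    then obtain z where z: "gle a z" "gle z b" "z \<noteq> a" "z \<noteq> b" by blast
    have zu: "z \<in> C u" using CVX[OF a b z(1,2)] .
    have "R u a z" "R u z b" using C1[OF a zu] C1[OF zu b] z(1,2) by blast+
    thus False using cv zu z(3,4) unfolding covers_def by blast
  qed
  have "gle a b" using C1[OF a b] ab(1) by blast
  thus ?thesis unfolding covers_def using nz a b ab(2) LL_iff by blast
qed

lemma covL2B: assumes a: "a \<in> C u" and b: "b \<in> C u" and cv: "covers LL gle a b" shows "covers (C u) (R u) a b"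
proof -
  have ab: "gle a b" "a \<noteq> b" using cv unfolding covers_def by blast+
  have nz: "\<not> (\<exists>z\<in>C u. R u a z \<and> R u z b \<and> z \<noteq> a \<and> z \<noteq> b)"
  proof
    assume "\<exists>z\<in>C u. R u a z \<and> R u z b \<and> z \<noteq> a \<and> z \<noteq> b"
    then obtain z where z: "z \<in> C u" "R u a z" "R u z b" "z \<noteq> a" "z \<noteq> b" by blast
    have "gle a z" "gle z b" using C1[OF a z(1)] C1[OF z(1) b] z(2,3) by blast+
    moreover have "z \<in> LL" using z(1) LL_iff by blast
    ultimately show False using cv z(4,5) unfolding covers_def by blast
  qed
  have "R u a b" using C1[OF a b] ab(1) by blast
  thus ?thesis unfolding covers_def using nz a b ab(2) by blast
qed

lemma L_usm: assumes sm: "\<forall>x. semimodular_on (C x) (R x)" shows "semimodular_on LL gle"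
  unfolding semimodular_on_def
proof (intro allI impI)
  fix a b c assume h: "covers LL gle a b \<and> covers LL gle a c \<and> b \<noteq> c"
  let ?u = "be a"
  have b: "b \<in> C ?u" using ST2[OF covL_st] h by blast
  have c: "c \<in> C ?u" using ST2[OF covL_st] h by blast
  have a: "a \<in> C ?u" using be_in ST1[OF covL_st] h by blast
  have "covers (C ?u) (R ?u) a b" "covers (C ?u) (R ?u) a c" using covL2B[OF a b] covL2B[OF a c] h by blast+
  hence "covers (C ?u) (R ?u) b (jn ?u b c) \<and> covers (C ?u) (R ?u) c (jn ?u b c)"
    using sm h unfolding semimodular_on_def by blast
  thus "covers LL gle b (ljoin LL gle b c) \<and> covers LL gle c (ljoin LL gle b c)"
    using L_join_eq[OF b c] covB2L by metis
qed

lemma L_lsm: assumes sm: "\<forall>x. semimodular_on (C x) (\<lambda>p q. R x q p)" shows "semimodular_on LL (\<lambda>p q. gle q p)"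
  unfolding semimodular_on_def covers_flip[of LL gle] ljoin_flip[of LL gle]
proof (intro allI impI)
  fix a b c assume h: "covers LL gle b a \<and> covers LL gle c a \<and> b \<noteq> c"
  let ?u = "al a"
  have b: "b \<in> C ?u" using ST1[OF covL_st] h by blast
  have c: "c \<in> C ?u" using ST1[OF covL_st] h by blast
  have a: "a \<in> C ?u" using al_in ST2[OF covL_st] h by blast
  have cv: "covers (C ?u) (R ?u) b a" "covers (C ?u) (R ?u) c a" using covL2B[OF b a] covL2B[OF c a] h by blast+
  have "semimodular_on (C ?u) (\<lambda>p q. R ?u q p)" using sm by blast
  hence "covers (C ?u) (\<lambda>p q. R ?u q p) a b \<and> covers (C ?u) (\<lambda>p q. R ?u q p) a c \<and> b \<noteq> c \<longrightarrow>
     covers (C ?u) (\<lambda>p q. R ?u q p) b (ljoin (C ?u) (\<lambda>p q. R ?u q p) b c) \<and>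
     covers (C ?u) (\<lambda>p q. R ?u q p) c (ljoin (C ?u) (\<lambda>p q. R ?u q p) b c)"
    unfolding semimodular_on_def
    apply -
    apply (erule allE[where x=a])
    apply (erule allE[where x=b])
    apply (erule allE[where x=c])
    apply assumption
    done
  hence "covers (C ?u) (R ?u) (mt ?u b c) b \<and> covers (C ?u) (R ?u) (mt ?u b c) c"
    using cv h unfolding covers_flip[of "C ?u" "R ?u"] ljoin_flip[of "C ?u" "R ?u"] by blast
  thus "covers LL gle (lmeet LL gle b c) b \<and> covers LL gle (lmeet LL gle b c) c"
    using L_meet_eq[OF b c] covB2L by metis
qed

end

theorem theorem3p2:
  fixes C :: "'s::lattice \<Rightarrow> 'a set" and R :: "'s \<Rightarrow> 'a \<Rightarrow> 'a \<Rightarrow> bool"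
  assumes S_fl: "finite_length (UNIV :: 's set) (\<le>)"
    and glued: "glued_system C R"
  shows "((\<forall>x. semimodular_on (C x) (R x)) \<longrightarrow>
            fl_lattice (glued_carrier C) (glued_le C R) \<and>
            semimodular_on (glued_carrier C) (glued_le C R)) \<and>
         ((\<forall>x. modular_on (C x) (R x)) \<longrightarrow>
            fl_lattice (glued_carrier C) (glued_le C R) \<and>
            modular_on (glued_carrier C) (glued_le C R))"
proof -
  interpret g: glued C R by (rule glued.intro) (fact S_fl, fact glued)
  show ?thesis
  proof (intro conjI impI)
    assume sm: "\<forall>x. semimodular_on (C x) (R x)"
    show "fl_lattice (glued_carrier C) (glued_le C R)" using g.L_fl .
    show "semimodular_on (glued_carrier C) (glued_le C R)" using g.L_usm[OF sm] .
  next
    assume mo: "\<forall>x. modular_on (C x) (R x)"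
    show "fl_lattice (glued_carrier C) (glued_le C R)" using g.L_fl .
    have usm: "\<forall>x. semimodular_on (C x) (R x)" using fll.modular_usm[OF g.blk] mo by blast
    have lsm: "\<forall>x. semimodular_on (C x) (\<lambda>p q. R x q p)" using fll.modular_lsm[OF g.blk] mo by blast
    show "modular_on (glued_carrier C) (glued_le C R)"
      using fll.usm_lsm_modular[OF g.L_fll g.L_usm[OF usm] g.L_lsm[OF lsm]] .
  qed
qed


end
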